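(* Let $a_i=i-\tfrac12$ ($i\in\mathbb Z$) and $FS_\mu:=s_{\mu;a}$. For every Young diagram $(p_1,\dots,p_d\mid q_1,\dots,q_d)$ in Frobenius notation, $$FS_{(p_1,\dots,p_d\mid q_1,\dots,q_d)}=\sum_{\substack{p'_1\le p_1,\dots,p'_d\le p_d\\ q'_1\le q_1,\dots,q'_d\le q_d}}\det[c_{p_i,p'_j}]_{i,j=1}^d\,\det[c_{q_i,q'_j}]_{i,j=1}^d\,s_{(p'_1,\dots,p'_d\mid q'_1,\dots,q'_d)},$$ where $c_{pp'}=(-1)^{p-p'}e_{p-p'}(\tfrac12,\tfrac32,\dots,\tfrac{2p-1}2)$ for $p\ge p'$ (with $p$ arguments), $c_{pp'}=0$ for $p'>p$, and the sum is over tuples of nonnegative integers $p'_1>\dots>p'_d\ge0$, $q'_1>\dots>q'_d\ge0$ (so that the indices are Young diagrams in Frobenius notation).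
   Context: $\Lambda$ is the algebra of symmetric functions over $\mathbb C$ with complete homogeneous $h_k$, elementary $e_k$ and Schur functions $s_\mu$. For a sequence $a=(a_i)_{i\in\mathbb Z}$ define $h_{k;a}=\sum_{i=1}^k(-1)^{k-i}e_{k-i}(a_1,\dots,a_{k-1})h_i$ for $k\ge1$, $h_{0;a}=1$, $h_{k;a}=0$ for $k<0$; let $(\tau^ra)_i=a_{i+r}$; and set $s_{\mu;a}=\det[h_{\mu_i-i+j;\,\tau^{1-j}a}]_{i,j=1}^N$ for any $N\ge\ell(\mu)$. Frobenius notation: a diagram $\mu$ with $d$ diagonal boxes is $(p_1,\dots,p_d\mid q_1,\dots,q_d)$ with $p_i=\mu_i-i$, $q_i=\mu'_i-i$, $\mu'$ the transposed diagram. *)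

theory Defs
  imports Complex_Main "HOL-Library.Poly_Mapping" "HOL-Combinatorics.Permutations"
begin

(* The ring of symmetric functions over C, realised as the free polynomial algebra
  C[h_1, h_2, ...] on the complete homogeneous functions (fundamental theorem on symmetric
  functions). *)
type_synonym sym_fun = "(nat \<Rightarrow>\<^sub>0 nat) \<Rightarrow>\<^sub>0 complex"

definition lconst :: "complex \<Rightarrow> sym_fun" where
  "lconst c = Poly_Mapping.single 0 c"

definition hc :: "int \<Rightarrow> sym_fun" where
  "hc k = (if k < 0 then 0 else if k = 0 then 1
           else Poly_Mapping.single (Poly_Mapping.single (nat k) 1) 1)"

definition esym :: "nat \<Rightarrow> complex list \<Rightarrow> complex" where
  "esym m xs = (\<Sum>S\<in>{S. S \<subseteq> {..<length xs} \<and> card S = m}. \<Prod>i\<in>S. xs ! i)"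

definition detN :: "nat \<Rightarrow> (nat \<Rightarrow> nat \<Rightarrow> 'a::comm_ring_1) \<Rightarrow> 'a" where
  "detN N f = (\<Sum>\<sigma>\<in>{\<sigma>. \<sigma> permutes {..<N}}. of_int (sign \<sigma>) * (\<Prod>i<N. f i (\<sigma> i)))"

definition tau :: "int \<Rightarrow> (int \<Rightarrow> complex) \<Rightarrow> (int \<Rightarrow> complex)" where
  "tau r a = (\<lambda>i. a (i + r))"

definition hsh :: "(int \<Rightarrow> complex) \<Rightarrow> int \<Rightarrow> sym_fun" where
  "hsh a k = (if k < 0 then 0 else if k = 0 then 1 else
     (\<Sum>i\<in>{1..k}. lconst ((-1) ^ nat (k - i) * esym (nat (k - i)) (map a [1..k-1])) * hc i))"

(* s_{mu;a} = det[h_{mu_i - i + j; tau^{1-j} a}]_{i,j=1..N}; mu is given 1-indexed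
  as a function nat => nat (mu i = 0 for i beyond the length), N \<ge> length of mu. *)
definition schur_sh :: "(int \<Rightarrow> complex) \<Rightarrow> nat \<Rightarrow> (nat \<Rightarrow> nat) \<Rightarrow> sym_fun" where
  "schur_sh a N mu = detN N (\<lambda>i j. hsh (tau (1 - int (j+1)) a)
                        (int (mu (i+1)) - int (i+1) + int (j+1)))"

definition schur :: "nat \<Rightarrow> (nat \<Rightarrow> nat) \<Rightarrow> sym_fun" where
  "schur N mu = detN N (\<lambda>i j. hc (int (mu (i+1)) - int (i+1) + int (j+1)))"

definition frob_valid :: "nat list \<Rightarrow> nat list \<Rightarrow> bool" where
  "frob_valid p q \<longleftrightarrow> length p = length q \<and> sorted_wrt (>) p \<and> sorted_wrt (>) q"

definition frob_part :: "nat list \<Rightarrow> nat list \<Rightarrow> nat \<Rightarrow> nat" where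
  "frob_part p q i = (if 1 \<le> i \<and> i \<le> length p then p ! (i - 1) + i
     else card {j. 1 \<le> j \<and> j \<le> length q \<and> i \<le> q ! (j - 1) + j})"

(* number of rows of (p | q): mu'_1 = q_1 + 1 *)
definition frob_len :: "nat list \<Rightarrow> nat" where
  "frob_len q = (if q = [] then 0 else q ! 0 + 1)"

definition a_half :: "int \<Rightarrow> complex" where
  "a_half i = of_int i - 1/2"

definition FS :: "nat list \<Rightarrow> nat list \<Rightarrow> sym_fun" where
  "FS p q = schur_sh a_half (frob_len q) (frob_part p q)"

definition s_frob :: "nat list \<Rightarrow> nat list \<Rightarrow> sym_fun" where
  "s_frob p q = schur (frob_len q) (frob_part p q)"

definition ccoef :: "nat \<Rightarrow> nat \<Rightarrow> complex" where
  "ccoef p p' = (if p' \<le> p then (-1) ^ (p - p') *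
       esym (p - p') (map (\<lambda>k. of_nat k + 1/2) [0..<p]) else 0)"

end

theory Submission
  imports Defs "Jordan_Normal_Form.Determinant" "HOL-Computational_Algebra.Formal_Power_Series"
begin


lemma detN_det: "detN N f = det (mat N N (\<lambda>(i,j). f i j))"
  by (subst det_def'[of _ N]) (auto simp: detN_def atLeast0LessThan)

lemma detN_cong:
  assumes "\<And>i j. i < N \<Longrightarrow> j < N \<Longrightarrow> f i j = g i j"
  shows "detN N f = detN N g"
proof -
  have "mat N N (\<lambda>(i,j). f i j) = mat N N (\<lambda>(i,j). g i j)"
    by (rule eq_matI) (auto simp: assms)
  then show ?thesis by (simp add: detN_det)
qed

lemma detN_transpose: "detN N (\<lambda>i j. f j i) = detN N f"
proof -
  have "mat N N (\<lambda>(i,j). f j i) = transpose_mat (mat N N (\<lambda>(i,j). f i j))"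
    by (rule eq_matI) auto
  then show ?thesis unfolding detN_det using det_transpose[OF mat_carrier[of N N "\<lambda>(i,j). f i j"]] by metis
qed

lemma detN_permute_rows:
  assumes "\<pi> permutes {..<N}"
  shows "detN N (\<lambda>i j. f (\<pi> i) j) = of_int (sign \<pi>) * detN N f"
proof -
  have p: "\<pi> permutes {0..<N}" using assms by (simp add: atLeast0LessThan)
  have pi: "\<And>i. i < N \<Longrightarrow> \<pi> i < N" using permutes_in_image[OF p] by simp
  have "mat N N (\<lambda>(i,j). f (\<pi> i) j) = mat N N (\<lambda>(i,j). mat N N (\<lambda>(i,j). f i j) $$ (\<pi> i, j))"
    by (rule eq_matI) (simp_all add: pi)
  then show ?thesis
    using det_permute_rows[OF _ p, of "mat N N (\<lambda>(i,j). f i j)"] by (simp add: detN_det)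
qed

lemma detN_permute_cols:
  assumes "\<pi> permutes {..<N}"
  shows "detN N (\<lambda>i j. f i (\<pi> j)) = of_int (sign \<pi>) * detN N f"
proof -
  have "detN N (\<lambda>i j. f i (\<pi> j)) = detN N (\<lambda>j i. f i (\<pi> j))"
    by (rule detN_transpose[symmetric])
  also have "\<dots> = of_int (sign \<pi>) * detN N (\<lambda>j i. f i j)"
    by (rule detN_permute_rows[OF assms])
  also have "detN N (\<lambda>j i. f i j) = detN N f" by (rule detN_transpose)
  finally show ?thesis .
qed

lemma detN_identical_rows:
  assumes "i \<noteq> k" "i < N" "k < N" "\<And>j. j < N \<Longrightarrow> f i j = f k j"
  shows "detN N f = 0"
proof -
  have "row (mat N N (\<lambda>(i,j). f i j)) i = row (mat N N (\<lambda>(i,j). f i j)) k"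
    by (rule eq_vecI) (simp_all add: assms(2,3,4))
  then show ?thesis unfolding detN_det
    by (intro det_identical_rows[OF _ assms(1) assms(2) assms(3)]) simp_all
qed

lemma detN_mult:
  "detN N (\<lambda>i j. \<Sum>k<N. f i k * g k j) = detN N f * detN N g"
proof -
  have "mat N N (\<lambda>(i,j). \<Sum>k<N. f i k * g k j) = mat N N (\<lambda>(i,j). f i j) * mat N N (\<lambda>(i,j). g i j)"
    by (rule eq_matI) (auto simp: scalar_prod_def atLeast0LessThan intro!: sum.cong)
  then show ?thesis by (simp add: detN_det det_mult[of _ N])
qed

lemma detN_upper_unit:
  assumes "\<And>i j. j < i \<Longrightarrow> i < N \<Longrightarrow> f i j = 0" "\<And>i. i < N \<Longrightarrow> f i i = 1"
  shows "detN N f = 1"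
proof -
  have ut: "upper_triangular (mat N N (\<lambda>(i,j). f i j))"
    unfolding upper_triangular_def using assms(1) by simp
  have "det (mat N N (\<lambda>(i,j). f i j)) = prod_list (diag_mat (mat N N (\<lambda>(i,j). f i j)))"
    by (rule det_upper_triangular[OF ut mat_carrier])
  also have "\<dots> = (\<Prod>i = 0..<N. mat N N (\<lambda>(i,j). f i j) $$ (i,i))"
    by (simp add: prod_list_diag_prod)
  also have "\<dots> = 1" by (rule prod.neutral) (simp add: assms(2))
  finally show ?thesis by (simp add: detN_det)
qed

lemma right_inv_aux:
  assumes B: "B \<in> carrier_mat N N" and AB: "mat N N (\<lambda>(i,j). f i j) * B = 1\<^sub>m N"
  shows "\<forall>i<N. \<forall>j<N. (\<Sum>k<N. f i k * B $$ (k, j)) = (if i = j then 1 else 0)"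
proof (intro allI impI)
  fix i j assume that: "i < N" "j < N"
  have "(\<Sum>k<N. f i k * B $$ (k, j)) = (mat N N (\<lambda>(i,j). f i j) * B) $$ (i,j)"
    using B that by (simp add: scalar_prod_def atLeast0LessThan)
  also have "\<dots> = 1\<^sub>m N $$ (i,j)" unfolding AB ..
  also have "\<dots> = (if i = j then 1 else 0)" using that by simp
  finally show "(\<Sum>k<N. f i k * B $$ (k, j)) = (if i = j then 1 else 0)" .
qed

lemma detN_right_inverse:
  assumes "detN N f = 1"
  shows "\<exists>g. \<forall>i<N. \<forall>j<N. (\<Sum>k<N. f i k * g k j) = (if i = j then 1 else 0)"
proof -
  let ?A = "mat N N (\<lambda>(i,j). f i j)"
  have A: "?A \<in> carrier_mat N N" by (rule mat_carrier)
  have one: "(1::'a) \<cdot>\<^sub>m 1\<^sub>m N = 1\<^sub>m N" by (rule eq_matI) auto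
  have d: "det ?A = 1" using assms unfolding detN_det .
  have AA: "?A * adj_mat ?A = 1\<^sub>m N" using adj_mat(2)[OF A] unfolding d one .
  show ?thesis
    by (rule exI[of _ "\<lambda>k j. adj_mat ?A $$ (k,j)"], rule right_inv_aux[OF adj_mat(1)[OF A] AA])
qed

lemma detN_multilinear:
  assumes "finite S"
  shows "detN N (\<lambda>i j. \<Sum>x\<in>S. A i x * B x j) =
    (\<Sum>h\<in>PiE {..<N} (\<lambda>_. S). (\<Prod>i<N. A i (h i)) * detN N (\<lambda>i j. B (h i) j))"
proof -
  have "detN N (\<lambda>i j. \<Sum>x\<in>S. A i x * B x j) =
     (\<Sum>\<sigma>\<in>{\<sigma>. \<sigma> permutes {..<N}}. of_int (sign \<sigma>) *
        (\<Sum>h\<in>PiE {..<N} (\<lambda>_. S). \<Prod>i<N. A i (h i) * B (h i) (\<sigma> i)))"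
    unfolding detN_def by (simp add: prod_sum_PiE assms)
  also have "\<dots> = (\<Sum>h\<in>PiE {..<N} (\<lambda>_. S). \<Sum>\<sigma>\<in>{\<sigma>. \<sigma> permutes {..<N}}.
        (\<Prod>i<N. A i (h i)) * (of_int (sign \<sigma>) * (\<Prod>i<N. B (h i) (\<sigma> i))))"
    by (subst sum.swap) (simp add: sum_distrib_left prod.distrib mult_ac)
  also have "\<dots> = (\<Sum>h\<in>PiE {..<N} (\<lambda>_. S). (\<Prod>i<N. A i (h i)) * detN N (\<lambda>i j. B (h i) j))"
    unfolding detN_def by (simp add: sum_distrib_left)
  finally show ?thesis .
qed



definition decl :: "nat set \<Rightarrow> nat \<Rightarrow> nat list set" where
  "decl S d = {xs. length xs = d \<and> sorted_wrt (>) xs \<and> set xs \<subseteq> S}"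

lemma sorted_gt_distinct: "sorted_wrt (>) (xs::nat list) \<Longrightarrow> distinct xs"
  by (induction xs) auto

lemma finite_decl: "finite S \<Longrightarrow> finite (decl S d)"
  by (rule finite_subset[OF _ finite_lists_length_eq[of S d]]) (auto simp: decl_def)

lemma decl_unique:
  assumes "sorted_wrt (>) (xs::nat list)" "sorted_wrt (>) ys" "set xs = set ys"
  shows "xs = ys"
proof -
  have a: "sorted_wrt (<) (rev xs)" "sorted_wrt (<) (rev ys)" using assms(1,2) by (simp_all add: sorted_wrt_rev)
  have "rev xs = rev ys"
    by (rule sorted_distinct_set_unique)
       (use a assms(3) in \<open>auto simp: strict_sorted_iff\<close>)
  then show ?thesis by simp
qed

lemma CB:
  assumes S: "finite S"
  shows "detN d (\<lambda>i b. \<Sum>x\<in>S. A i x * B x b) =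
    (\<Sum>xs\<in>decl S d. detN d (\<lambda>i j. A i (xs!j)) * detN d (\<lambda>a b. B (xs!a) b))"
proof -
  let ?P = "PiE {..<d} (\<lambda>_. S)"
  let ?I = "{h\<in>?P. inj_on h {..<d}}"
  let ?F = "\<lambda>h. (\<Prod>i<d. A i (h i)) * detN d (\<lambda>i j. B (h i) j)"
  let ?Sig = "Sigma (decl S d) (\<lambda>_. {\<pi>. \<pi> permutes {..<d}})"
  let ?\<Phi> = "\<lambda>(xs, \<pi>). restrict (\<lambda>i. xs ! \<pi> i) {..<d}"
  have "detN d (\<lambda>i b. \<Sum>x\<in>S. A i x * B x b) = (\<Sum>h\<in>?P. ?F h)"
    by (rule detN_multilinear[OF S])
  also have "\<dots> = (\<Sum>h\<in>?I. ?F h)"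
  proof (rule sum.mono_neutral_right)
    show "finite ?P" using S by (simp add: finite_PiE)
    show "?I \<subseteq> ?P" by blast
    show "\<forall>h\<in>?P - ?I. ?F h = 0"
    proof
      fix h assume h: "h \<in> ?P - ?I"
      then obtain i k where ik: "i < d" "k < d" "i \<noteq> k" "h i = h k"
        unfolding inj_on_def by auto
      have "detN d (\<lambda>i j. B (h i) j) = 0"
        by (rule detN_identical_rows[OF ik(3) ik(1) ik(2)]) (simp add: ik(4))
      then show "?F h = 0" by simp
    qed
  qed
  also have "\<dots> = (\<Sum>z\<in>?Sig. ?F (?\<Phi> z))"
  proof (rule sum.reindex_bij_betw[symmetric])
    show "bij_betw ?\<Phi> ?Sig ?I"
    proof (rule bij_betwI')
      fix z1 z2 assume z1: "z1 \<in> ?Sig" and z2: "z2 \<in> ?Sig"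
      obtain xs \<pi> where z1e: "z1 = (xs, \<pi>)" by (cases z1)
      obtain ys \<rho> where z2e: "z2 = (ys, \<rho>)" by (cases z2)
      have xs: "length xs = d" "sorted_wrt (>) xs" and \<pi>: "\<pi> permutes {..<d}"
        using z1 z1e by (auto simp: decl_def)
      have ys: "length ys = d" "sorted_wrt (>) ys" and \<rho>: "\<rho> permutes {..<d}"
        using z2 z2e by (auto simp: decl_def)
      show "(?\<Phi> z1 = ?\<Phi> z2) = (z1 = z2)"
      proof
        assume eq: "?\<Phi> z1 = ?\<Phi> z2"
        have e: "xs ! \<pi> i = ys ! \<rho> i" if "i < d" for i
          using fun_cong[OF eq, of i] that z1e z2e by simp
        have "set xs = (\<lambda>i. xs ! \<pi> i) ` {..<d}"
        proof -
          have "set xs = (\<lambda>i. xs ! i) ` {..<d}" using xs(1) by (auto simp: set_conv_nth)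
          also have "\<dots> = (\<lambda>i. xs ! i) ` (\<pi> ` {..<d})" using permutes_image[OF \<pi>] by simp
          finally show ?thesis by (simp add: image_comp comp_def)
        qed
        also have "\<dots> = (\<lambda>i. ys ! \<rho> i) ` {..<d}" using e by (auto intro!: image_cong)
        also have "\<dots> = set ys"
        proof -
          have "set ys = (\<lambda>i. ys ! i) ` {..<d}" using ys(1) by (auto simp: set_conv_nth)
          also have "\<dots> = (\<lambda>i. ys ! i) ` (\<rho> ` {..<d})" using permutes_image[OF \<rho>] by simp
          finally show ?thesis by (simp add: image_comp comp_def)
        qed
        finally have xy: "xs = ys" using decl_unique xs(2) ys(2) by blast
        have "\<pi> i = \<rho> i" for i
        proof (cases "i < d")
          case True
          have "\<pi> i < d" "\<rho> i < d" using True permutes_in_image[OF \<pi>] permutes_in_image[OF \<rho>] by auto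
          then show ?thesis using e[OF True] xy nth_eq_iff_index_eq[OF sorted_gt_distinct[OF xs(2)]] xs(1)
            by auto
        next
          case False
          then show ?thesis using permutes_not_in[OF \<pi>] permutes_not_in[OF \<rho>] by auto
        qed
        then show "z1 = z2" using xy z1e z2e by auto
      qed simp
    next
      fix z assume z: "z \<in> ?Sig"
      obtain xs \<pi> where ze: "z = (xs, \<pi>)" by (cases z)
      have xs: "length xs = d" "sorted_wrt (>) xs" "set xs \<subseteq> S" and \<pi>: "\<pi> permutes {..<d}"
        using z ze by (auto simp: decl_def)
      have pi: "\<pi> i < d" if "i < d" for i using permutes_in_image[OF \<pi>] that by simp
      have "?\<Phi> z \<in> ?P" using xs pi ze by (auto simp: PiE_def)
      moreover have "inj_on (?\<Phi> z) {..<d}"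
      proof (rule inj_onI)
        fix i k assume "i \<in> {..<d}" "k \<in> {..<d}" "?\<Phi> z i = ?\<Phi> z k"
        then have "xs ! \<pi> i = xs ! \<pi> k" "i < d" "k < d" using ze by auto
        then have "\<pi> i = \<pi> k" using nth_eq_iff_index_eq[OF sorted_gt_distinct[OF xs(2)]] xs(1) pi by auto
        then show "i = k" using permutes_inj[OF \<pi>] by (auto dest: injD)
      qed
      ultimately show "?\<Phi> z \<in> ?I" by blast
    next
      fix h assume h: "h \<in> ?I"
      define X where "X = h ` {..<d}"
      define xs where "xs = rev (sorted_list_of_set X)"
      have finX: "finite X" unfolding X_def by simp
      have cardX: "card X = d" unfolding X_def using h card_image[of h "{..<d}"] by auto
      have xs1: "length xs = d" unfolding xs_def using cardX finX by simp
      have xs2: "sorted_wrt (>) xs" unfolding xs_def sorted_wrt_rev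
        using strict_sorted_list_of_set by simp
      have xs3: "set xs = X" unfolding xs_def using finX by simp
      have xsS: "set xs \<subseteq> S" using xs3 h unfolding X_def by (auto simp: PiE_def)
      have dxs: "distinct xs" using sorted_gt_distinct[OF xs2] .
      have bn: "bij_betw (nth xs) {..<d} X" using bij_betw_nth[OF dxs] xs1 xs3 by simp
      have bh: "bij_betw h {..<d} X" unfolding X_def using h by (simp add: bij_betw_imageI)
      define \<pi> where "\<pi> = (\<lambda>i. if i < d then the_inv_into {..<d} (nth xs) (h i) else i)"
      have b\<pi>: "bij_betw \<pi> {..<d} {..<d}"
      proof -
        have "bij_betw (the_inv_into {..<d} (nth xs) \<circ> h) {..<d} {..<d}"
          by (rule bij_betw_trans[OF bh bij_betw_the_inv_into[OF bn]])
        then show ?thesis by (rule bij_betw_cong[THEN iffD1, rotated]) (auto simp: \<pi>_def)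
      qed
      have \<pi>p: "\<pi> permutes {..<d}" by (rule bij_imp_permutes[OF b\<pi>]) (auto simp: \<pi>_def)
      have hx: "xs ! \<pi> i = h i" if "i < d" for i
      proof -
        have "h i \<in> X" using that unfolding X_def by auto
        then show ?thesis using that f_the_inv_into_f_bij_betw[OF bn] by (auto simp: \<pi>_def)
      qed
      have "(xs, \<pi>) \<in> ?Sig" using xs1 xs2 xsS \<pi>p by (auto simp: decl_def)
      moreover have "h = ?\<Phi> (xs, \<pi>)"
      proof
        fix i show "h i = ?\<Phi> (xs, \<pi>) i"
          using hx h by (cases "i < d") (auto simp: PiE_def extensional_def)
      qed
      ultimately show "\<exists>z\<in>?Sig. h = ?\<Phi> z" by blast
    qed
  qed
  also have "\<dots> = (\<Sum>xs\<in>decl S d. \<Sum>\<pi>\<in>{\<pi>. \<pi> permutes {..<d}}.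
        (\<Prod>i<d. A i (xs ! \<pi> i)) * (of_int (sign \<pi>) * detN d (\<lambda>a b. B (xs!a) b)))"
  proof -
    have *: "?F (?\<Phi> (xs, \<pi>)) = (\<Prod>i<d. A i (xs ! \<pi> i)) * (of_int (sign \<pi>) * detN d (\<lambda>a b. B (xs!a) b))"
      if "\<pi> \<in> {\<pi>. \<pi> permutes {..<d}}" for xs \<pi>
    proof -
      have "(\<Prod>i<d. A i (?\<Phi> (xs, \<pi>) i)) = (\<Prod>i<d. A i (xs ! \<pi> i))" by simp
      moreover have "detN d (\<lambda>i j. B (?\<Phi> (xs, \<pi>) i) j) = detN d (\<lambda>i j. B (xs ! \<pi> i) j)"
        by (rule detN_cong) simp
      moreover have "detN d (\<lambda>i j. B (xs ! \<pi> i) j) = of_int (sign \<pi>) * detN d (\<lambda>a b. B (xs!a) b)"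
        by (rule detN_permute_rows[of _ _ "\<lambda>a b. B (xs!a) b"]) (use that in simp)
      ultimately show ?thesis by simp
    qed
    have "(\<Sum>z\<in>?Sig. ?F (?\<Phi> z)) = (\<Sum>(xs,\<pi>)\<in>?Sig. ?F (?\<Phi> (xs,\<pi>)))"
      by (rule sum.cong) (auto split: prod.splits)
    also have "\<dots> = (\<Sum>xs\<in>decl S d. \<Sum>\<pi>\<in>{\<pi>. \<pi> permutes {..<d}}. ?F (?\<Phi> (xs,\<pi>)))"
      by (rule sum.Sigma[symmetric]) (auto simp: finite_decl S finite_permutations)
    also have "\<dots> = (\<Sum>xs\<in>decl S d. \<Sum>\<pi>\<in>{\<pi>. \<pi> permutes {..<d}}.
        (\<Prod>i<d. A i (xs ! \<pi> i)) * (of_int (sign \<pi>) * detN d (\<lambda>a b. B (xs!a) b)))"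
      by (rule sum.cong[OF refl], rule sum.cong[OF refl]) (use * in blast)
    finally show ?thesis .
  qed
  also have "\<dots> = (\<Sum>xs\<in>decl S d. detN d (\<lambda>i j. A i (xs!j)) * detN d (\<lambda>a b. B (xs!a) b))"
    unfolding detN_def by (simp add: sum_distrib_right mult_ac)
  finally show ?thesis .
qed



lemma detN_last_row_unit:
  assumes w: "w < Suc n" and row: "\<And>j. j < Suc n \<Longrightarrow> f n j = (if j = w then 1 else 0)"
  shows "detN (Suc n) f = (-1)^(n + w) * detN n (\<lambda>i j. f i (if j < w then j else Suc j))"
proof -
  let ?A = "mat (Suc n) (Suc n) (\<lambda>(i,j). f i j)"
  have A: "?A \<in> carrier_mat (Suc n) (Suc n)" by (rule mat_carrier)
  have "det ?A = (\<Sum>j<Suc n. ?A $$ (n,j) * cofactor ?A n j)"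
    by (rule laplace_expansion_row[OF A]) simp
  also have "\<dots> = (\<Sum>j<Suc n. if j = w then cofactor ?A n j else 0)"
  proof (rule sum.cong[OF refl])
    fix j assume "j \<in> {..<Suc n}"
    then have "?A $$ (n,j) = (if j = w then 1 else 0)" using row by simp
    then show "?A $$ (n,j) * cofactor ?A n j = (if j = w then cofactor ?A n j else 0)" by simp
  qed
  also have "\<dots> = cofactor ?A n w" using w by (simp only: sum.delta finite_lessThan lessThan_iff if_True)
  also have "\<dots> = (-1)^(n+w) * det (mat_delete ?A n w)" unfolding cofactor_def ..
  also have "mat_delete ?A n w = mat n n (\<lambda>(i,j). f i (if j < w then j else Suc j))"
    by (rule eq_matI) (auto simp: mat_delete_def)
  finally show ?thesis unfolding detN_det .
qed

lemma ins_mono: "strict_mono (\<lambda>j::nat. if j < w then j else Suc j)"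
  by (rule strict_monoI) auto

lemma sorted_list_ins:
  assumes ws: "sorted_wrt (<) (ws @ [w])" and sub: "set (ws @ [w]) \<subseteq> {..<Suc n}"
  shows "sorted_list_of_set ({..<Suc n} - set (ws @ [w])) =
         map (\<lambda>j. if j < w then j else Suc j) (sorted_list_of_set ({..<n} - set ws))"
proof -
  let ?ins = "\<lambda>j::nat. if j < w then j else Suc j"
  have wsw: "\<forall>x\<in>set ws. x < w" using ws by (simp add: sorted_wrt_append)
  have wn: "w \<le> n" using sub by auto
  have seteq: "?ins ` ({..<n} - set ws) = {..<Suc n} - set (ws @ [w])"
  proof (intro equalityI subsetI)
    fix z assume "z \<in> ?ins ` ({..<n} - set ws)"
    then obtain y where y: "y < n" "y \<notin> set ws" "z = ?ins y" by auto
    show "z \<in> {..<Suc n} - set (ws @ [w])"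
    proof (cases "y < w")
      case True then show ?thesis using y by auto
    next
      case False then show ?thesis using y wsw by auto
    qed
  next
    fix z assume z: "z \<in> {..<Suc n} - set (ws @ [w])"
    show "z \<in> ?ins ` ({..<n} - set ws)"
    proof (cases "z < w")
      case True
      then have "z = ?ins z" by simp
      moreover have "z \<in> {..<n} - set ws" using z True wn by auto
      ultimately show ?thesis by blast
    next
      case False
      then have zw: "z > w" using z by auto
      then have "z = ?ins (z - 1)" by auto
      moreover have "z - 1 \<in> {..<n} - set ws" using z zw wsw by auto
      ultimately show ?thesis by blast
    qed
  qed
  show ?thesis
  proof (rule sorted_distinct_set_unique)
    show "sorted (sorted_list_of_set ({..<Suc n} - set (ws @ [w])))" by simp
    show "distinct (sorted_list_of_set ({..<Suc n} - set (ws @ [w])))" by simp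
    have "sorted_wrt (\<lambda>x y. ?ins x < ?ins y) (sorted_list_of_set ({..<n} - set ws))"
      by (rule sorted_wrt_mono_rel[OF _ strict_sorted_list_of_set]) auto
    then have sm: "sorted_wrt (<) (map ?ins (sorted_list_of_set ({..<n} - set ws)))"
      by (simp add: sorted_wrt_map)
    then show "sorted (map ?ins (sorted_list_of_set ({..<n} - set ws)))"
      and "distinct (map ?ins (sorted_list_of_set ({..<n} - set ws)))"
      by (simp_all add: strict_sorted_iff)
    show "set (sorted_list_of_set ({..<Suc n} - set (ws @ [w]))) = set (map ?ins (sorted_list_of_set ({..<n} - set ws)))"
      using seteq by simp
  qed
qed

lemma detN_unit_rows:
  assumes "sorted_wrt (<) ws" "length ws + d = N" "set ws \<subseteq> {..<N}"
    "\<And>i j. d \<le> i \<Longrightarrow> i < N \<Longrightarrow> j < N \<Longrightarrow> f i j = (if j = ws ! (i - d) then 1 else 0)"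
  shows "detN N f = (-1)^(sum_list ws + (\<Sum>i\<in>{d..<N}. i)) *
      detN d (\<lambda>i j. f i (sorted_list_of_set ({..<N} - set ws) ! j))"
  using assms
proof (induction ws arbitrary: N f rule: rev_induct)
  case Nil
  then have N: "N = d" by simp
  have sl: "sorted_list_of_set {..<N} = [0..<d]" using N by (simp add: lessThan_atLeast0)
  have "detN d (\<lambda>i j. f i (sorted_list_of_set ({..<N} - set []) ! j)) = detN d f"
    by (rule detN_cong) (simp add: sl)
  then show ?case using N by simp
next
  case (snoc w ws)
  define n where "n = length ws + d"
  have N: "N = Suc n" using snoc.prems(2) by (simp add: n_def)
  have wN: "w < Suc n" using snoc.prems(3) N by auto
  have wsw: "\<forall>x\<in>set ws. x < w" using snoc.prems(1) by (simp add: sorted_wrt_append)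
  have row: "f n j = (if j = w then 1 else 0)" if "j < Suc n" for j
    using snoc.prems(4)[of n j] that N by (simp add: n_def nth_append)
  let ?ins = "\<lambda>j::nat. if j < w then j else Suc j"
  have step: "detN N f = (-1)^(n + w) * detN n (\<lambda>i j. f i (?ins j))"
    unfolding N by (rule detN_last_row_unit[of w n f, OF wN row])
  have IH: "detN n (\<lambda>i j. f i (?ins j)) = (-1)^(sum_list ws + (\<Sum>i\<in>{d..<n}. i)) *
      detN d (\<lambda>i j. f i (?ins (sorted_list_of_set ({..<n} - set ws) ! j)))"
  proof (rule snoc.IH)
    show "sorted_wrt (<) ws" using snoc.prems(1) by (simp add: sorted_wrt_append)
    show "length ws + d = n" by (simp add: n_def)
    show "set ws \<subseteq> {..<n}" using wsw wN by auto
    fix i j assume ij: "d \<le> i" "i < n" "j < n"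
    have idx: "i - d < length ws" using ij by (simp add: n_def)
    have wi: "ws ! (i - d) < w" using wsw idx by auto
    have "f i (?ins j) = (if ?ins j = (ws @ [w]) ! (i - d) then 1 else 0)"
      using snoc.prems(4)[of i "?ins j"] ij N by auto
    also have "(ws @ [w]) ! (i - d) = ws ! (i - d)" using idx by (simp add: nth_append)
    also have "(?ins j = ws ! (i - d)) = (j = ws ! (i - d))" using wi by auto
    finally show "f i (?ins j) = (if j = ws ! (i - d) then 1 else 0)" .
  qed
  have sl: "sorted_list_of_set ({..<N} - set (ws @ [w])) = map ?ins (sorted_list_of_set ({..<n} - set ws))"
    unfolding N by (rule sorted_list_ins) (use snoc.prems N in auto)
  have len: "length (sorted_list_of_set ({..<n} - set ws)) = d"
  proof -
    have "card ({..<n} - set ws) = n - length ws"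
    proof -
      have ds: "distinct ws" using snoc.prems(1) by (simp add: strict_sorted_iff sorted_wrt_append)
      have "set ws \<subseteq> {..<n}" using wsw wN by auto
      then show ?thesis using ds by (simp add: card_Diff_subset distinct_card)
    qed
    then show ?thesis by (simp add: n_def)
  qed
  have eqd: "detN d (\<lambda>i j. f i (?ins (sorted_list_of_set ({..<n} - set ws) ! j))) =
      detN d (\<lambda>i j. f i (sorted_list_of_set ({..<N} - set (ws @ [w])) ! j))"
  proof (rule detN_cong)
    fix i j assume "i < d" "j < d"
    then show "f i (?ins (sorted_list_of_set ({..<n} - set ws) ! j)) =
      f i (sorted_list_of_set ({..<N} - set (ws @ [w])) ! j)" unfolding sl using len by simp
  qed
  have dn: "d \<le> n" by (simp add: n_def)
  have sums: "(\<Sum>i\<in>{d..<N}. i) = (\<Sum>i\<in>{d..<n}. i) + n" using dn N by simp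
  show ?case
    unfolding step IH eqd sums
    by (simp add: power_add mult_ac)
qed



lemma schur_stable_step:
  assumes "mu (Suc n) = 0"
  shows "schur (Suc n) mu = schur n mu"
proof -
  let ?f = "\<lambda>i j. hc (int (mu (i+1)) - int (i+1) + int (j+1))"
  have row: "?f n j = (if j = n then 1 else 0)" if "j < Suc n" for j
    using that assms by (auto simp: hc_def)
  have "detN (Suc n) ?f = (-1)^(n+n) * detN n (\<lambda>i j. ?f i (if j < n then j else Suc j))"
    by (rule detN_last_row_unit[of n n ?f]) (use row in auto)
  also have "detN n (\<lambda>i j. ?f i (if j < n then j else Suc j)) = detN n ?f"
    by (rule detN_cong) simp
  finally show ?thesis unfolding schur_def by simp
qed

lemma schur_stable:
  assumes "\<And>i. i > M \<Longrightarrow> mu i = 0" "M \<le> N"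
  shows "schur N mu = schur M mu"
  using assms(2)
proof (induction N rule: dec_induct)
  case base then show ?case by simp
next
  case (step n)
  have "schur (Suc n) mu = schur n mu" by (rule schur_stable_step) (use assms(1) step(1) in auto)
  then show ?case using step by simp
qed

lemma detN_zero_block:
  assumes k: "k < d" and z: "\<And>a b. k \<le> a \<Longrightarrow> a < d \<Longrightarrow> b \<le> k \<Longrightarrow> f a b = 0"
  shows "detN d f = 0"
  unfolding detN_def
proof (rule sum.neutral, intro ballI)
  fix \<sigma> assume "\<sigma> \<in> {\<sigma>. \<sigma> permutes {..<d}}"
  then have \<sigma>: "\<sigma> permutes {..<d}" by simp
  have "\<exists>a\<in>{k..<d}. \<sigma> a \<le> k"
  proof (rule ccontr)
    assume nex: "\<not> (\<exists>a\<in>{k..<d}. \<sigma> a \<le> k)"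
    have sub: "\<sigma> ` {k..<d} \<subseteq> {Suc k..<d}"
    proof
      fix y assume "y \<in> \<sigma> ` {k..<d}"
      then obtain a where a: "a \<in> {k..<d}" "y = \<sigma> a" by auto
      have "\<sigma> a < d" using permutes_in_image[OF \<sigma>, of a] a(1) by simp
      then show "y \<in> {Suc k..<d}" using nex a by force
    qed
    have "inj_on \<sigma> {k..<d}" using permutes_inj[OF \<sigma>] by (auto intro: inj_on_subset)
    then have "card {k..<d} \<le> card {Suc k..<d}"
      using card_inj_on_le[OF _ sub] by simp
    then show False using k by simp
  qed
  then obtain a where a: "k \<le> a" "a < d" "\<sigma> a \<le> k" by auto
  have "(\<Prod>i<d. f i (\<sigma> i)) = 0"
    by (rule prod_zero) (use a z in auto)
  then show "of_int (sign \<sigma>) * (\<Prod>i<d. f i (\<sigma> i)) = 0" by simp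
qed

lemma detN_scale:
  "detN d (\<lambda>i j. u i * v j * f i j) = (\<Prod>i<d. u i) * (\<Prod>j<d. v j) * detN d f"
  unfolding detN_def sum_distrib_left
proof (rule sum.cong[OF refl])
  fix \<sigma> assume "\<sigma> \<in> {\<sigma>. \<sigma> permutes {..<d}}"
  then have \<sigma>: "\<sigma> permutes {..<d}" by simp
  have pv: "(\<Prod>i<d. v (\<sigma> i)) = (\<Prod>j<d. v j)"
    using prod.permute[OF \<sigma>, of v] by (simp add: comp_def)
  show "of_int (sign \<sigma>) * (\<Prod>i<d. u i * v (\<sigma> i) * f i (\<sigma> i)) =
    (\<Prod>i<d. u i) * (\<Prod>j<d. v j) * (of_int (sign \<sigma>) * (\<Prod>i<d. f i (\<sigma> i)))"
    by (simp add: prod.distrib pv mult_ac)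
qed

definition rv :: "nat \<Rightarrow> nat \<Rightarrow> nat" where
  "rv d j = (if j < d then d - 1 - j else j)"

lemma rv_permutes: "rv d permutes {..<d}"
proof (rule bij_imp_permutes)
  show "bij_betw (rv d) {..<d} {..<d}"
  proof (rule bij_betw_byWitness[of _ "rv d"])
    show "\<forall>a\<in>{..<d}. rv d (rv d a) = a" by (auto simp: rv_def)
    show "\<forall>a\<in>{..<d}. rv d (rv d a) = a" by (auto simp: rv_def)
    show "rv d ` {..<d} \<subseteq> {..<d}" by (auto simp: rv_def)
    show "rv d ` {..<d} \<subseteq> {..<d}" by (auto simp: rv_def)
  qed
  show "\<And>x. x \<notin> {..<d} \<Longrightarrow> rv d x = x" by (auto simp: rv_def)
qed

lemma sign_sq: "(of_int (sign p) :: 'a::comm_ring_1) * of_int (sign p) = 1"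
  by (simp add: sign_def)

lemma rev_nth_rv: "length xs = d \<Longrightarrow> j < d \<Longrightarrow> rev xs ! j = xs ! rv d j"
  by (simp add: rev_nth rv_def)

lemma lconst_0[simp]: "lconst 0 = 0" by (simp add: lconst_def)
lemma lconst_1[simp]: "lconst 1 = 1" by (simp add: lconst_def single_one)
lemma lconst_add: "lconst (a + b) = lconst a + lconst b" by (simp add: lconst_def single_add)
lemma lconst_mult: "lconst (a * b) = lconst a * lconst b" by (simp add: lconst_def mult_single)
lemma lconst_uminus: "lconst (- a) = - lconst a" by (simp add: lconst_def single_uminus)
lemma lconst_diff: "lconst (a - b) = lconst a - lconst b"
  using lconst_add[of a "-b"] by (simp add: lconst_uminus)
lemma lconst_sum: "lconst (sum f A) = (\<Sum>x\<in>A. lconst (f x))"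
  by (induction A rule: infinite_finite_induct) (auto simp: lconst_add)
lemma lconst_prod: "lconst (prod f A) = (\<Prod>x\<in>A. lconst (f x))"
  by (induction A rule: infinite_finite_induct) (auto simp: lconst_mult)
lemma lconst_of_int: "lconst (of_int k) = of_int k"
proof -
  have "lconst (of_nat n) = of_nat n" for n by (induction n) (auto simp: lconst_add)
  then show ?thesis by (cases k rule: int_cases) (auto simp: lconst_uminus lconst_add lconst_diff)
qed
lemma lconst_power: "lconst (a ^ n) = lconst a ^ n"
  by (induction n) (auto simp: lconst_mult)

lemma detN_lconst: "detN d (\<lambda>i j. lconst (f i j)) = lconst (detN d f)"
  unfolding detN_def by (simp add: lconst_sum lconst_mult lconst_prod lconst_of_int)



definition lin :: "complex \<Rightarrow> complex fps" where
  "lin c = 1 - fps_const c * fps_X"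

definition Pr :: "int set \<Rightarrow> complex fps" where
  "Pr S = (\<Prod>s\<in>S. lin (a_half s))"

definition Amf :: "int \<Rightarrow> complex fps" where
  "Amf m = (if 0 \<le> m then Pr {1..m} else inverse (Pr {m+1..0}))"

definition Binv :: "nat \<Rightarrow> complex fps" where
  "Binv j = Pr {1 - int j..0}"

lemma fps_const_prod: "(\<Prod>i\<in>B. fps_const (z i)) = fps_const (\<Prod>i\<in>B. z i)"
  by (induction B rule: infinite_finite_induct) (auto simp: fps_const_mult)

lemma prod_neg_X:
  "(\<Prod>i\<in>B. fps_const (- y i) * fps_X) = fps_const ((-1)^card B * (\<Prod>i\<in>B. y i)) * (fps_X::complex fps) ^ card B"
proof -
  have "(\<Prod>i\<in>B. fps_const (- y i) * fps_X) = (\<Prod>i\<in>B. fps_const (- y i)) * (\<Prod>i\<in>B. fps_X)"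
    by (rule prod.distrib)
  also have "(\<Prod>i\<in>B. fps_const (- y i)) = fps_const (\<Prod>i\<in>B. - y i)" by (rule fps_const_prod)
  also have "(\<Prod>i\<in>B. - y i) = (-1)^card B * (\<Prod>i\<in>B. y i)"
    by (induction B rule: infinite_finite_induct) auto
  also have "(\<Prod>i\<in>B. (fps_X::complex fps)) = fps_X ^ card B" by simp
  finally show ?thesis .
qed

lemma CF:
  assumes I: "finite I"
  shows "fps_nth (\<Prod>i\<in>I. lin (y i)) n = (-1)^n * (\<Sum>B\<in>{B. B \<subseteq> I \<and> card B = n}. \<Prod>i\<in>B. y i)"
proof -
  have "(\<Prod>i\<in>I. lin (y i)) = (\<Prod>i\<in>I. fps_const (- y i) * fps_X + 1)"
    unfolding lin_def by (rule prod.cong[OF refl]) (simp add: fps_const_neg[symmetric] del: fps_const_neg)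
  also have "\<dots> = (\<Sum>B\<in>Pow I. (\<Prod>i\<in>B. fps_const (- y i) * fps_X) * (\<Prod>i\<in>I - B. 1))"
    by (rule prod_add[OF I])
  also have "\<dots> = (\<Sum>B\<in>Pow I. fps_const ((-1)^card B * (\<Prod>i\<in>B. y i)) * fps_X ^ card B)"
    by (simp only: prod_neg_X prod.neutral_const mult_1_right)
  finally have eq: "(\<Prod>i\<in>I. lin (y i)) = \<dots>" .
  have "fps_nth (\<Prod>i\<in>I. lin (y i)) n =
      (\<Sum>B\<in>Pow I. if card B = n then (-1)^n * (\<Prod>i\<in>B. y i) else 0)"
    unfolding eq fps_sum_nth by (rule sum.cong[OF refl]) (simp add: fps_X_power_mult_right_nth)
  also have "\<dots> = (\<Sum>B\<in>{B\<in>Pow I. card B = n}. (-1)^n * (\<Prod>i\<in>B. y i))"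
    by (rule sum.inter_filter[symmetric]) (simp add: I)
  also have "{B\<in>Pow I. card B = n} = {B. B \<subseteq> I \<and> card B = n}" by auto
  finally show ?thesis by (simp add: sum_distrib_left)
qed

lemma CF_0: "finite I \<Longrightarrow> fps_nth (\<Prod>i\<in>I. lin (y i)) 0 = 1"
proof -
  assume I: "finite I"
  have "{B. B \<subseteq> I \<and> card B = 0} = {{}}"
  proof (intro equalityI subsetI)
    fix B assume "B \<in> {B. B \<subseteq> I \<and> card B = 0}"
    then have "B \<subseteq> I" "card B = 0" by auto
    then have "B = {}" using finite_subset[OF _ I] by (metis card_0_eq)
    then show "B \<in> {{}}" by simp
  qed simp
  then show ?thesis using CF[OF I, of y 0] by simp
qed

lemma CF_deg: "finite I \<Longrightarrow> card I < n \<Longrightarrow> fps_nth (\<Prod>i\<in>I. lin (y i)) n = 0"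
proof -
  assume I: "finite I" and n: "card I < n"
  have E: "{B. B \<subseteq> I \<and> card B = n} = {}"
  proof (intro equalityI subsetI)
    fix B assume "B \<in> {B. B \<subseteq> I \<and> card B = n}"
    then have "B \<subseteq> I" "card B = n" by auto
    then have "n \<le> card I" using card_mono[OF I] by metis
    then show "B \<in> {}" using n by simp
  qed simp
  show ?thesis using CF[OF I, of y n] unfolding E by simp
qed

lemma Pr_0: "finite S \<Longrightarrow> fps_nth (Pr S) 0 = 1"
  unfolding Pr_def by (rule CF_0)

lemma Pr_deg: "finite S \<Longrightarrow> card S < n \<Longrightarrow> fps_nth (Pr S) n = 0"
  unfolding Pr_def by (rule CF_deg)

lemma Pr_union: "finite S \<Longrightarrow> finite T \<Longrightarrow> S \<inter> T = {} \<Longrightarrow> Pr (S \<union> T) = Pr S * Pr T"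
  unfolding Pr_def by (rule prod.union_disjoint)

lemma Amf_Binv:
  assumes "m \<ge> - int j"
  shows "Amf m * Binv j = Pr {1 - int j..m}"
proof (cases "0 \<le> m")
  case True
  have "{1 - int j..m} = {1..m} \<union> {1 - int j..0}" using True by auto
  then have "Pr {1 - int j..m} = Pr {1..m} * Pr {1 - int j..0}"
    by (simp add: Pr_union)
  then show ?thesis using True by (simp add: Amf_def Binv_def)
next
  case False
  have "{1 - int j..0} = {1 - int j..m} \<union> {m+1..0}" using False assms by auto
  then have e: "Pr {1 - int j..0} = Pr {1 - int j..m} * Pr {m+1..0}"
    by (simp add: Pr_union)
  have nz: "fps_nth (Pr {m+1..0}) 0 \<noteq> 0" by (simp add: Pr_0)
  have "Amf m * Binv j = inverse (Pr {m+1..0}) * (Pr {1 - int j..m} * Pr {m+1..0})"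
    using False by (simp add: Amf_def Binv_def e)
  also have "\<dots> = Pr {1 - int j..m} * (inverse (Pr {m+1..0}) * Pr {m+1..0})"
    by (simp only: mult_ac)
  also have "\<dots> = Pr {1 - int j..m}" using inverse_mult_eq_1[OF nz] by simp
  finally show ?thesis .
qed

lemma Amf_0: "fps_nth (Amf m) 0 = 1"
  by (simp add: Amf_def Pr_0 fps_inverse_nth_0)

lemma Binv_0: "fps_nth (Binv j) 0 = 1"
  by (simp add: Binv_def Pr_0)

lemma Binv_deg: "j < n \<Longrightarrow> fps_nth (Binv j) n = 0"
  unfolding Binv_def by (rule Pr_deg) auto

lemma Amf_pos_deg: "0 \<le> m \<Longrightarrow> nat m < n \<Longrightarrow> fps_nth (Amf m) n = 0"
  unfolding Amf_def by (auto intro!: Pr_deg)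



definition Lk :: "int \<Rightarrow> complex fps \<Rightarrow> sym_fun" where
  "Lk k F = (if k < 0 then 0 else (\<Sum>n\<le>nat k. lconst (fps_nth F n) * hc (k - int n)))"

lemma hc_neg: "k < 0 \<Longrightarrow> hc k = 0"
  by (simp add: hc_def)

lemma hc_zero: "hc 0 = 1"
  by (simp add: hc_def)

lemma esym_Pr:
  assumes k: "1 \<le> k"
  shows "fps_nth (Pr {1 - int j..k - int j - 1}) n =
    (-1)^n * esym n (map (tau (- int j) a_half) [1..k-1])"
proof -
  define L where "L = nat (k - 1)"
  define xs where "xs = map (tau (- int j) a_half) [1..k-1]"
  have lxs: "length xs = L" by (simp add: xs_def L_def)
  have nxs: "xs ! i = a_half (1 + int i - int j)" if "i < L" for i
    using that k by (simp add: xs_def L_def nth_upto tau_def algebra_simps)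
  have img: "(\<lambda>i. 1 + int i - int j) ` {..<L} = {1 - int j..k - int j - 1}"
  proof (intro equalityI subsetI)
    fix x assume "x \<in> (\<lambda>i. 1 + int i - int j) ` {..<L}"
    then show "x \<in> {1 - int j..k - int j - 1}" using k by (auto simp: L_def)
  next
    fix x assume x: "x \<in> {1 - int j..k - int j - 1}"
    then have "x = 1 + int (nat (x - 1 + int j)) - int j" "nat (x - 1 + int j) < L"
      using k by (auto simp: L_def)
    then show "x \<in> (\<lambda>i. 1 + int i - int j) ` {..<L}" by blast
  qed
  have "Pr {1 - int j..k - int j - 1} = (\<Prod>i<L. lin (a_half (1 + int i - int j)))"
    unfolding Pr_def img[symmetric]
    by (subst prod.reindex) (auto simp: inj_on_def)
  also have "\<dots> = (\<Prod>i<L. lin (xs ! i))"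
    by (rule prod.cong) (simp_all add: nxs)
  finally have e: "Pr {1 - int j..k - int j - 1} = (\<Prod>i<L. lin (xs ! i))" .
  show ?thesis
    unfolding e CF[OF finite_lessThan] esym_def xs_def[symmetric] lxs by simp
qed

lemma hsh_Lk: "hsh (tau (- int j) a_half) k = Lk k (Amf (k - int j - 1) * Binv j)"
proof (cases "k < 0")
  case True then show ?thesis by (simp add: hsh_def Lk_def)
next
  case False
  note k0 = this
  show ?thesis
  proof (cases "k = 0")
    case True
    then show ?thesis
      by (simp add: hsh_def Lk_def fps_mult_nth_0 Amf_0 Binv_0 hc_def)
  next
    case False
    then have k: "1 \<le> k" using k0 by simp
    define xs where "xs = map (tau (- int j) a_half) [1..k-1]"
    define F where "F = Amf (k - int j - 1) * Binv j"
    have F: "F = Pr {1 - int j..k - int j - 1}" unfolding F_def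
      by (rule Amf_Binv) (use k in simp)
    have Fn: "fps_nth F n = (-1)^n * esym n xs" for n
      unfolding F xs_def by (rule esym_Pr[OF k])
    have Fk: "fps_nth F (nat k) = 0"
      unfolding F by (rule Pr_deg) (use k in auto)
    have "Lk k F = (\<Sum>n\<le>nat k. lconst (fps_nth F n) * hc (k - int n))"
      using k by (simp add: Lk_def)
    also have "\<dots> = (\<Sum>n<nat k. lconst (fps_nth F n) * hc (k - int n))"
      using Fk by (simp add: lessThan_Suc_atMost[symmetric])
    also have "\<dots> = (\<Sum>i\<in>{1..k}. lconst ((-1) ^ nat (k - i) * esym (nat (k - i)) xs) * hc i)"
      by (rule sum.reindex_bij_witness[of _ "\<lambda>i. nat (k - i)" "\<lambda>n. k - int n"]) (auto simp: Fn)
    also have "\<dots> = hsh (tau (- int j) a_half) k"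
      using k by (simp add: hsh_def xs_def)
    finally show ?thesis by (simp add: F_def)
  qed
qed

lemma Lk_mult:
  assumes "0 \<le> k"
  shows "Lk k (F * G) = (\<Sum>n1\<le>nat k. \<Sum>n2\<le>nat k. lconst (fps_nth F n1 * fps_nth G n2) * hc (k - int n1 - int n2))"
proof -
  define K where "K = nat k"
  define g where "g = (\<lambda>i l. lconst (fps_nth F i * fps_nth G l) * hc (k - int i - int l))"
  have "Lk k (F * G) = (\<Sum>n\<le>K. lconst (\<Sum>i=0..n. fps_nth F i * fps_nth G (n - i)) * hc (k - int n))"
    using assms by (simp add: Lk_def K_def fps_mult_nth)
  also have "\<dots> = (\<Sum>n\<le>K. \<Sum>i\<le>n. g i (n - i))"
    by (rule sum.cong[OF refl]) (auto simp: g_def lconst_sum sum_distrib_right atLeast0AtMost intro!: sum.cong)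
  also have "\<dots> = (\<Sum>(i, l)\<in>{(i, l). i + l \<le> K}. g i l)"
    by (rule sum.triangle_reindex_eq[symmetric])
  also have "\<dots> = (\<Sum>(i, l)\<in>{..K} \<times> {..K}. g i l)"
  proof (rule sum.mono_neutral_left)
    show "finite ({..K} \<times> {..K})" by simp
    show "{(i, l). i + l \<le> K} \<subseteq> {..K} \<times> {..K}" by auto
    show "\<forall>x\<in>{..K} \<times> {..K} - {(i, l). i + l \<le> K}. (case x of (i, l) \<Rightarrow> g i l) = 0"
    proof
      fix x assume x: "x \<in> {..K} \<times> {..K} - {(i, l). i + l \<le> K}"
      obtain i l where il: "x = (i, l)" by (cases x)
      then have "k - int i - int l < 0" using assms x by (auto simp: K_def)
      then show "(case x of (i, l) \<Rightarrow> g i l) = 0" by (simp add: g_def hc_def il)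
    qed
  qed
  also have "\<dots> = (\<Sum>i\<le>K. \<Sum>l\<le>K. g i l)"
    by (rule sum.cartesian_product[symmetric])
  finally show ?thesis by (simp add: g_def K_def)
qed



definition Bm :: "nat \<Rightarrow> nat \<Rightarrow> sym_fun" where
  "Bm r j = (if r \<le> j then lconst (fps_nth (Binv j) (j - r)) else 0)"

definition Dm :: "nat \<Rightarrow> nat \<Rightarrow> sym_fun" where
  "Dm w k = (if w \<le> k then lconst (fps_nth (Amf (- int w - 1)) (k - w)) else 0)"

definition Em :: "nat \<Rightarrow> nat \<Rightarrow> sym_fun" where
  "Em k l = (if k \<le> l then lconst (fps_nth (Binv l) (l - k)) else 0)"

lemma sum_rev_atMost: "(\<Sum>x\<le>(p::nat). f x) = (\<Sum>n\<le>p. f (p - n))"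
  by (rule sum.reindex_bij_witness[of _ "\<lambda>n. p - n" "\<lambda>x. p - x"]) (auto simp: diff_diff_cancel)

lemma inner_Bm:
  assumes "j < N"
  shows "(\<Sum>r<N. hc (c + int r) * Bm r j) = (\<Sum>n2\<le>j. hc (c + int j - int n2) * lconst (fps_nth (Binv j) n2))"
proof -
  have "(\<Sum>r<N. hc (c + int r) * Bm r j) = (\<Sum>r\<le>j. hc (c + int r) * Bm r j)"
    by (rule sum.mono_neutral_right) (use assms in \<open>auto simp: Bm_def\<close>)
  also have "\<dots> = (\<Sum>n2\<le>j. hc (c + int (j - n2)) * Bm (j - n2) j)"
    by (rule sum_rev_atMost)
  also have "\<dots> = (\<Sum>n2\<le>j. hc (c + int j - int n2) * lconst (fps_nth (Binv j) n2))"
    by (rule sum.cong[OF refl]) (simp add: Bm_def of_nat_diff add_diff_eq)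
  finally show ?thesis .
qed

lemma ccoef_Amf:
  assumes "n \<le> p"
  shows "ccoef p (p - n) = fps_nth (Amf (int p)) n"
proof -
  have img: "(\<lambda>i. int i + 1) ` {..<p} = {1..int p}"
  proof (intro equalityI subsetI)
    fix x assume "x \<in> {1..int p}"
    then have "x = int (nat (x - 1)) + 1" "nat (x - 1) < p" by auto
    then show "x \<in> (\<lambda>i. int i + 1) ` {..<p}" by blast
  qed auto
  have "Pr {1..int p} = (\<Prod>i<p. lin (a_half (int i + 1)))"
    unfolding Pr_def img[symmetric] by (subst prod.reindex) (auto simp: inj_on_def)
  also have "\<dots> = (\<Prod>i<p. lin (map (\<lambda>k. of_nat k + 1/2) [0..<p] ! i))"
    by (rule prod.cong) (auto simp: a_half_def add.commute)
  finally have e: "Amf (int p) = (\<Prod>i<p. lin (map (\<lambda>k. of_nat k + 1/2) [0..<p] ! i))"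
    by (simp add: Amf_def)
  show ?thesis
    unfolding e CF[OF finite_lessThan] ccoef_def esym_def using assms by simp
qed

lemma ccoef_zero: "p < x \<Longrightarrow> ccoef p x = 0"
  by (simp add: ccoef_def)

definition HB :: "nat \<Rightarrow> nat \<Rightarrow> nat \<Rightarrow> sym_fun" where
  "HB N x j = (\<Sum>r<N. hc (int x + int r + 1) * Bm r j)"

lemma row_pos:
  assumes pK: "p \<le> K" and j: "j < N"
  shows "hsh (tau (- int j) a_half) (int p + int j + 1) = (\<Sum>x\<le>K. lconst (ccoef p x) * HB N x j)"
proof -
  define A where "A = Amf (int p)"
  define B where "B = Binv j"
  define T where "T = (\<Sum>n1\<le>p. \<Sum>n2\<le>j. lconst (fps_nth A n1) * (hc (int p + int j + 1 - int n1 - int n2) * lconst (fps_nth B n2)))"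
  have "hsh (tau (- int j) a_half) (int p + int j + 1) = Lk (int p + int j + 1) (A * B)"
    by (simp add: hsh_Lk A_def B_def)
  also have "\<dots> = (\<Sum>n1\<le>p+j+1. \<Sum>n2\<le>p+j+1. lconst (fps_nth A n1 * fps_nth B n2) * hc (int p + int j + 1 - int n1 - int n2))"
    by (subst Lk_mult) (simp_all add: nat_add_distrib)
  also have "\<dots> = (\<Sum>n1\<le>p. \<Sum>n2\<le>p+j+1. lconst (fps_nth A n1 * fps_nth B n2) * hc (int p + int j + 1 - int n1 - int n2))"
    by (rule sum.mono_neutral_right) (auto simp: A_def Amf_pos_deg)
  also have "\<dots> = T" unfolding T_def
  proof (rule sum.cong[OF refl])
    fix n1 assume "n1 \<in> {..p}"
    have "(\<Sum>n2\<le>p+j+1. lconst (fps_nth A n1 * fps_nth B n2) * hc (int p + int j + 1 - int n1 - int n2)) =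
          (\<Sum>n2\<le>j. lconst (fps_nth A n1 * fps_nth B n2) * hc (int p + int j + 1 - int n1 - int n2))"
      by (rule sum.mono_neutral_right) (auto simp: B_def Binv_deg)
    then show "(\<Sum>n2\<le>p+j+1. lconst (fps_nth A n1 * fps_nth B n2) * hc (int p + int j + 1 - int n1 - int n2)) =
          (\<Sum>n2\<le>j. lconst (fps_nth A n1) * (hc (int p + int j + 1 - int n1 - int n2) * lconst (fps_nth B n2)))"
      by (simp add: lconst_mult mult_ac)
  qed
  also have "T = (\<Sum>x\<le>K. lconst (ccoef p x) * HB N x j)"
  proof -
    have "(\<Sum>x\<le>K. lconst (ccoef p x) * HB N x j) = (\<Sum>x\<le>p. lconst (ccoef p x) * HB N x j)"
      by (rule sum.mono_neutral_right) (use pK in \<open>auto simp: ccoef_zero\<close>)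
    also have "\<dots> = (\<Sum>n1\<le>p. lconst (ccoef p (p - n1)) * HB N (p - n1) j)"
      by (rule sum_rev_atMost)
    also have "\<dots> = T" unfolding T_def
    proof (rule sum.cong[OF refl])
      fix n1 assume n1: "n1 \<in> {..p}"
      have "HB N (p - n1) j = (\<Sum>n2\<le>j. hc ((int (p - n1) + 1) + int j - int n2) * lconst (fps_nth B n2))"
        unfolding HB_def B_def using inner_Bm[OF j, of "int (p - n1) + 1"] by (simp add: add_ac)
      then show "lconst (ccoef p (p - n1)) * HB N (p - n1) j =
        (\<Sum>n2\<le>j. lconst (fps_nth A n1) * (hc (int p + int j + 1 - int n1 - int n2) * lconst (fps_nth B n2)))"
        using n1 by (simp add: ccoef_Amf A_def sum_distrib_left of_nat_diff algebra_simps)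
    qed
    finally show ?thesis ..
  qed
  finally show ?thesis .
qed



definition V :: "nat \<Rightarrow> nat \<Rightarrow> nat \<Rightarrow> sym_fun" where
  "V N k j = (\<Sum>r<N. hc (int r - int k) * Bm r j)"

lemma V_upper: "j < k \<Longrightarrow> V N k j = 0"
  unfolding V_def by (rule sum.neutral) (auto simp: Bm_def hc_def)

lemma V_diag: "k < N \<Longrightarrow> V N k k = 1"
proof -
  assume k: "k < N"
  have "V N k k = (\<Sum>r\<in>{k}. hc (int r - int k) * Bm r k)"
    unfolding V_def by (rule sum.mono_neutral_right) (use k in \<open>auto simp: Bm_def hc_def\<close>)
  also have "\<dots> = 1" by (simp add: Bm_def hc_def Binv_0)
  finally show ?thesis .
qed

lemma Bm_upper: "j < r \<Longrightarrow> Bm r j = 0" by (simp add: Bm_def)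
lemma Bm_diag: "Bm r r = 1" by (simp add: Bm_def Binv_0)
lemma Em_upper: "l < k \<Longrightarrow> Em k l = 0" by (simp add: Em_def)
lemma Em_diag: "Em k k = 1" by (simp add: Em_def Binv_0)

lemma row_neg:
  assumes w: "w < N" and j: "j < N"
  shows "hsh (tau (- int j) a_half) (int j - int w) = (\<Sum>k<N. Dm w k * V N k j)"
proof (cases "j < w")
  case True
  have "(\<Sum>k<N. Dm w k * V N k j) = 0"
    by (rule sum.neutral) (use True in \<open>auto simp: Dm_def V_upper\<close>)
  then show ?thesis using True by (simp add: hsh_def)
next
  case False
  then have wj: "w \<le> j" by simp
  define K where "K = j - w"
  define A where "A = Amf (- int w - 1)"
  define B where "B = Binv j"
  define T where "T = (\<Sum>n1\<le>K. \<Sum>n2\<le>j. lconst (fps_nth A n1) * (hc (int j - int w - int n1 - int n2) * lconst (fps_nth B n2)))"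
  have "hsh (tau (- int j) a_half) (int j - int w) = Lk (int j - int w) (A * B)"
    by (simp add: hsh_Lk A_def B_def)
  also have "\<dots> = (\<Sum>n1\<le>K. \<Sum>n2\<le>K. lconst (fps_nth A n1 * fps_nth B n2) * hc (int j - int w - int n1 - int n2))"
    by (subst Lk_mult) (use wj in \<open>simp_all add: K_def nat_diff_distrib\<close>)
  also have "\<dots> = T" unfolding T_def
  proof (rule sum.cong[OF refl])
    fix n1 assume "n1 \<in> {..K}"
    have "(\<Sum>n2\<le>K. lconst (fps_nth A n1 * fps_nth B n2) * hc (int j - int w - int n1 - int n2)) =
          (\<Sum>n2\<le>j. lconst (fps_nth A n1 * fps_nth B n2) * hc (int j - int w - int n1 - int n2))"
      by (rule sum.mono_neutral_left) (auto simp: K_def hc_def)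
    then show "(\<Sum>n2\<le>K. lconst (fps_nth A n1 * fps_nth B n2) * hc (int j - int w - int n1 - int n2)) =
          (\<Sum>n2\<le>j. lconst (fps_nth A n1) * (hc (int j - int w - int n1 - int n2) * lconst (fps_nth B n2)))"
      by (simp add: lconst_mult mult_ac)
  qed
  also have "T = (\<Sum>k<N. Dm w k * V N k j)"
  proof -
    have "(\<Sum>k<N. Dm w k * V N k j) = (\<Sum>k\<in>(\<lambda>n1. w + n1) ` {..K}. Dm w k * V N k j)"
    proof (rule sum.mono_neutral_right)
      show "finite {..<N}" by simp
      show "(\<lambda>n1. w + n1) ` {..K} \<subseteq> {..<N}" using j wj by (auto simp: K_def)
      show "\<forall>k\<in>{..<N} - (\<lambda>n1. w + n1) ` {..K}. Dm w k * V N k j = 0"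
      proof
        fix k assume k: "k \<in> {..<N} - (\<lambda>n1. w + n1) ` {..K}"
        show "Dm w k * V N k j = 0"
        proof (cases "w \<le> k")
          case True
          then have "k = w + (k - w)" by simp
          then have "\<not> k - w \<le> K" using k by (metis DiffD2 atMost_iff imageI)
          then have "j < k" by (auto simp: K_def)
          then show ?thesis by (simp add: V_upper)
        next
          case False then show ?thesis by (simp add: Dm_def)
        qed
      qed
    qed
    also have "\<dots> = (\<Sum>n1\<le>K. Dm w (w + n1) * V N (w + n1) j)"
      by (subst sum.reindex) (auto simp: inj_on_def)
    also have "\<dots> = T" unfolding T_def
    proof (rule sum.cong[OF refl])
      fix n1 assume "n1 \<in> {..K}"
      have "V N (w + n1) j = (\<Sum>r<N. hc (- int (w + n1) + int r) * Bm r j)"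
        unfolding V_def by (rule sum.cong) (simp_all add: algebra_simps)
      also have "\<dots> = (\<Sum>n2\<le>j. hc (- int (w + n1) + int j - int n2) * lconst (fps_nth B n2))"
        unfolding B_def by (rule inner_Bm[OF j])
      finally have "V N (w + n1) j = (\<Sum>n2\<le>j. hc (- int (w + n1) + int j - int n2) * lconst (fps_nth B n2))" .
      then show "Dm w (w + n1) * V N (w + n1) j =
        (\<Sum>n2\<le>j. lconst (fps_nth A n1) * (hc (int j - int w - int n1 - int n2) * lconst (fps_nth B n2)))"
        by (simp add: Dm_def A_def sum_distrib_left algebra_simps)
    qed
    finally show ?thesis ..
  qed
  finally show ?thesis .
qed

lemma DE:
  assumes w: "w < N" and l: "l < N"
  shows "(\<Sum>k<N. Dm w k * Em k l) = (if w = l then 1 else 0)"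
proof (cases "l < w")
  case True
  have "(\<Sum>k<N. Dm w k * Em k l) = 0"
    by (rule sum.neutral) (use True in \<open>auto simp: Dm_def Em_def\<close>)
  then show ?thesis using True by simp
next
  case False
  then have wl: "w \<le> l" by simp
  define A where "A = Amf (- int w - 1)"
  define B where "B = Binv l"
  have "(\<Sum>k<N. Dm w k * Em k l) = (\<Sum>k\<in>(\<lambda>i. w + i) ` {..l - w}. Dm w k * Em k l)"
  proof (rule sum.mono_neutral_right)
    show "finite {..<N}" by simp
    show "(\<lambda>i. w + i) ` {..l - w} \<subseteq> {..<N}" using l wl by auto
    show "\<forall>k\<in>{..<N} - (\<lambda>i. w + i) ` {..l - w}. Dm w k * Em k l = 0"
    proof
      fix k assume k: "k \<in> {..<N} - (\<lambda>i. w + i) ` {..l - w}"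
      show "Dm w k * Em k l = 0"
      proof (cases "w \<le> k")
        case True
        then have "k = w + (k - w)" by simp
        then have "\<not> k - w \<le> l - w" using k by (metis DiffD2 atMost_iff imageI)
        then have "l < k" using True by auto
        then show ?thesis by (simp add: Em_def)
      next
        case False then show ?thesis by (simp add: Dm_def)
      qed
    qed
  qed
  also have "\<dots> = (\<Sum>i\<le>l - w. Dm w (w + i) * Em (w + i) l)"
    by (subst sum.reindex) (auto simp: inj_on_def)
  also have "\<dots> = lconst (\<Sum>i=0..l - w. fps_nth A i * fps_nth B (l - w - i))"
    using wl by (auto simp: lconst_sum lconst_mult Dm_def Em_def A_def B_def atLeast0AtMost intro!: sum.cong)
  also have "\<dots> = lconst (fps_nth (A * B) (l - w))" by (simp add: fps_mult_nth)
  also have "\<dots> = (if w = l then 1 else 0)"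
  proof (cases "w = l")
    case True then show ?thesis by (simp add: fps_mult_nth_0 A_def B_def Amf_0 Binv_0)
  next
    case False
    have "A * B = Pr {1 - int l..- int w - 1}" unfolding A_def B_def
      by (rule Amf_Binv) (use wl False in simp)
    moreover have "fps_nth (Pr {1 - int l..- int w - 1}) (l - w) = 0"
      by (rule Pr_deg) (use wl False in auto)
    ultimately show ?thesis using False by simp
  qed
  finally show ?thesis .
qed

lemma prod_uminus_card: "(\<Prod>i\<in>S. - (x i :: complex)) = (-1)^card S * (\<Prod>i\<in>S. x i)"
  by (induction S rule: infinite_finite_induct) auto

lemma Em_ccoef: "Em k l = (-1)^(k+l) * lconst (ccoef l k)"
proof (cases "k \<le> l")
  case False then show ?thesis by (simp add: Em_def ccoef_def)
next
  case True
  define n where "n = l - k"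
  define xs where "xs = map (\<lambda>k. of_nat k + 1/2 :: complex) [0..<l]"
  have img: "(\<lambda>i. - int i) ` {..<l} = {1 - int l..0}"
  proof (intro equalityI subsetI)
    fix x assume "x \<in> {1 - int l..0}"
    then have "x = - int (nat (- x))" "nat (- x) < l" by auto
    then show "x \<in> (\<lambda>i. - int i) ` {..<l}" by blast
  qed auto
  have "Binv l = (\<Prod>i<l. lin (a_half (- int i)))"
    unfolding Binv_def Pr_def img[symmetric] by (subst prod.reindex) (auto simp: inj_on_def)
  also have "\<dots> = (\<Prod>i<l. lin (- (xs ! i)))"
    by (rule prod.cong) (auto simp: a_half_def xs_def algebra_simps)
  finally have e: "Binv l = (\<Prod>i<l. lin (- (xs ! i)))" .
  have "fps_nth (Binv l) n = (-1)^n * (\<Sum>B\<in>{B. B \<subseteq> {..<l} \<and> card B = n}. (-1)^n * (\<Prod>i\<in>B. xs ! i))"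
    unfolding e CF[OF finite_lessThan] by (simp add: prod_uminus_card)
  also have "\<dots> = (-1)^n * ((-1)^n * esym n xs)"
    by (simp add: esym_def xs_def sum_distrib_left)
  also have "\<dots> = (-1)^n * ccoef l k"
    using True by (simp add: ccoef_def xs_def n_def)
  finally have "fps_nth (Binv l) n = (-1)^n * ccoef l k" .
  moreover have "((-1)::sym_fun)^(k+l) = (-1)^n"
  proof -
    have "k + l = n + 2 * k" using True by (simp add: n_def)
    then show ?thesis by (simp add: power_add power_mult)
  qed
  ultimately show ?thesis using True
    by (simp add: Em_def n_def lconst_mult lconst_power lconst_uminus)
qed



lemma dec_gap:
  assumes "sorted_wrt (>) (q::nat list)" "j1 \<le> j2" "j2 < length q"
  shows "q ! j2 + (j2 - j1) \<le> q ! j1"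
  using assms(2,3)
proof (induction j2 rule: dec_induct)
  case base then show ?case by simp
next
  case (step n)
  have "q ! Suc n < q ! n" using assms(1) step by (auto simp: sorted_wrt_iff_nth_less)
  then show ?case using step by simp
qed

lemma down_closed_eq:
  assumes fin: "finite S" and dc: "\<And>x y. x \<in> S \<Longrightarrow> y \<le> x \<Longrightarrow> y \<in> (S::nat set)"
  shows "S = {..<card S}"
proof (intro equalityI subsetI)
  fix x assume x: "x \<in> S"
  have "{..x} \<subseteq> S" using dc x by auto
  then have "card {..x} \<le> card S" by (rule card_mono[OF fin])
  then show "x \<in> {..<card S}" by simp
next
  fix x assume x: "x \<in> {..<card S}"
  show "x \<in> S"
  proof (rule ccontr)
    assume "x \<notin> S"
    then have "S \<subseteq> {..<x}" using dc by (meson lessThan_iff not_le subsetI)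
    then have "card S \<le> x" using card_mono[of "{..<x}" S] by simp
    then show False using x by simp
  qed
qed

lemma frob_part_pos:
  assumes "i < length p"
  shows "frob_part p q (Suc i) = p ! i + Suc i"
  using assms by (simp add: frob_part_def)

lemma frob_len_ge:
  assumes "sorted_wrt (>) q"
  shows "length q \<le> frob_len q"
proof (cases q)
  case Nil then show ?thesis by (simp add: frob_len_def)
next
  case (Cons a l)
  have "q ! (length q - 1) + (length q - 1 - 0) \<le> q ! 0"
    by (rule dec_gap[OF assms]) (use Cons in auto)
  then show ?thesis using Cons by (simp add: frob_len_def)
qed

lemma set_q_bound:
  assumes "sorted_wrt (>) q" "frob_len q \<le> N"
  shows "set q \<subseteq> {..<N}"
proof
  fix x assume "x \<in> set q"
  then obtain j where j: "j < length q" "x = q ! j" by (auto simp: in_set_conv_nth)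
  have "q ! j + (j - 0) \<le> q ! 0" by (rule dec_gap[OF assms(1)]) (use j in auto)
  then show "x \<in> {..<N}" using j assms(2) by (cases q) (auto simp: frob_len_def)
qed

lemma frob_part_zero:
  assumes v: "frob_valid p q" and i: "frob_len q < i"
  shows "frob_part p q i = 0"
proof -
  have sq: "sorted_wrt (>) q" and lp: "length p = length q" using v by (auto simp: frob_valid_def)
  have "length q \<le> frob_len q" by (rule frob_len_ge[OF sq])
  then have ip: "\<not> (1 \<le> i \<and> i \<le> length p)" using i lp by simp
  have "{j. 1 \<le> j \<and> j \<le> length q \<and> i \<le> q ! (j - 1) + j} = {}"
  proof (intro equalityI subsetI)
    fix j assume "j \<in> {j. 1 \<le> j \<and> j \<le> length q \<and> i \<le> q ! (j - 1) + j}"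
    then have j: "1 \<le> j" "j \<le> length q" "i \<le> q ! (j - 1) + j" by auto
    have "q ! (j - 1) + (j - 1 - 0) \<le> q ! 0" by (rule dec_gap[OF sq]) (use j in auto)
    then have "q ! (j - 1) + j \<le> frob_len q" using j by (cases q) (auto simp: frob_len_def)
    then show "j \<in> {}" using j i by simp
  qed simp
  then show ?thesis using ip by (simp add: frob_part_def)
qed

lemma frob_part_neg:
  assumes v: "frob_valid p q" and N: "frob_len q \<le> N"
    and i1: "length q \<le> i" and i2: "i < N"
  shows "int (frob_part p q (Suc i)) =
    int i - int (sorted_list_of_set ({..<N} - set q) ! (i - length q))"
proof -
  define d where "d = length q"
  define ws where "ws = sorted_list_of_set ({..<N} - set q)"
  have sq: "sorted_wrt (>) q" and lp: "length p = d" using v by (auto simp: frob_valid_def d_def)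
  have dq: "distinct q" using sq by (induction q) auto
  have qN: "set q \<subseteq> {..<N}" by (rule set_q_bound[OF sq N])
  have lws: "length ws = N - d"
    unfolding ws_def using qN dq by (simp add: card_Diff_subset distinct_card d_def)
  have sws: "sorted_wrt (<) ws" unfolding ws_def by simp
  have setws: "set ws = {..<N} - set q" unfolding ws_def by simp
  define t where "t = i - d"
  have t: "t < length ws" using i1 i2 lws by (simp add: t_def d_def)
  define w where "w = ws ! t"
  have wws: "w \<in> set ws" using t by (simp add: w_def)
  then have wq: "w \<notin> set q" and wN: "w < N" using setws by auto
  have c1: "card {x\<in>set ws. x < w} = t"
  proof -
    have "{x\<in>set ws. x < w} = (nth ws) ` {..<t}"
    proof (intro equalityI subsetI)
      fix x assume "x \<in> {x\<in>set ws. x < w}"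
      then obtain k where k: "k < length ws" "x = ws ! k" "ws ! k < ws ! t"
        by (auto simp: in_set_conv_nth w_def)
      have "k < t"
      proof (rule ccontr)
        assume "\<not> k < t"
        then have "t \<le> k" by simp
        then have "ws ! t \<le> ws ! k" using sws k(1)
          by (cases "t = k") (auto simp: sorted_wrt_iff_nth_less less_imp_le)
        then show False using k(3) by simp
      qed
      then show "x \<in> (nth ws) ` {..<t}" using k by auto
    next
      fix x assume "x \<in> (nth ws) ` {..<t}"
      then obtain k where k: "k < t" "x = ws ! k" by auto
      then show "x \<in> {x\<in>set ws. x < w}" using t sws
        by (auto simp: w_def sorted_wrt_iff_nth_less)
    qed
    moreover have "inj_on (nth ws) {..<t}"
      using t strict_sorted_iff[of ws] sws by (auto simp: inj_on_def nth_eq_iff_index_eq)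
    ultimately show ?thesis by (simp add: card_image)
  qed
  have c2: "card {x\<in>set q. x < w} + card {x\<in>set ws. x < w} = w"
  proof -
    have eq: "{..<w} = {x\<in>set q. x < w} \<union> {x\<in>set ws. x < w}"
    proof (intro equalityI subsetI)
      fix x assume a: "x \<in> {..<w}"
      show "x \<in> {x\<in>set q. x < w} \<union> {x\<in>set ws. x < w}"
      proof (cases "x \<in> set q")
        case True then show ?thesis using a by simp
      next
        case False then have "x \<in> set ws" using a setws wN by simp
        then show ?thesis using a by simp
      qed
    next
      fix x assume "x \<in> {x\<in>set q. x < w} \<union> {x\<in>set ws. x < w}"
      then show "x \<in> {..<w}" by auto
    qed
    have dis: "{x\<in>set q. x < w} \<inter> {x\<in>set ws. x < w} = {}" using setws by auto
    have "card {..<w} = card ({x\<in>set q. x < w} \<union> {x\<in>set ws. x < w})"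
      using eq by (rule arg_cong)
    also have "\<dots> = card {x\<in>set q. x < w} + card {x\<in>set ws. x < w}"
      by (rule card_Un_disjoint) (simp_all add: dis)
    finally show ?thesis by simp
  qed
  have c3: "card {x\<in>set q. x < w} + card {x\<in>set q. w < x} = d"
  proof -
    have eq: "set q = {x\<in>set q. x < w} \<union> {x\<in>set q. w < x}"
    proof (intro equalityI subsetI)
      fix x assume x: "x \<in> set q"
      then have "x \<noteq> w" using wq by auto
      then have "x < w \<or> w < x" by arith
      then show "x \<in> {x\<in>set q. x < w} \<union> {x\<in>set q. w < x}" using x by auto
    qed auto
    have dis: "{x\<in>set q. x < w} \<inter> {x\<in>set q. w < x} = {}" by auto
    have "card (set q) = card ({x\<in>set q. x < w} \<union> {x\<in>set q. w < x})"
      using eq by (rule arg_cong)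
    also have "\<dots> = card {x\<in>set q. x < w} + card {x\<in>set q. w < x}"
      by (rule card_Un_disjoint) (simp_all add: dis)
    finally show ?thesis using dq by (simp add: distinct_card d_def)
  qed
  define S where "S = {j. j < d \<and> w < q ! j}"
  have cS: "card S = card {x\<in>set q. w < x}"
  proof -
    have "(nth q) ` S = {x\<in>set q. w < x}"
      by (auto simp: S_def in_set_conv_nth d_def)
    moreover have "inj_on (nth q) S" using dq by (auto simp: S_def inj_on_def nth_eq_iff_index_eq d_def)
    ultimately show ?thesis using card_image[of "nth q" S] by simp
  qed
  define c where "c = card S"
  have Sc: "S = {..<c}"
    unfolding c_def
  proof (rule down_closed_eq)
    show "finite S" by (simp add: S_def)
    fix x y assume x: "x \<in> S" and y: "y \<le> x"
    have "q ! x + (x - y) \<le> q ! y" by (rule dec_gap[OF sq y]) (use x in \<open>auto simp: S_def d_def\<close>)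
    then show "y \<in> S" using x y by (auto simp: S_def)
  qed
  have ci: "int c = int i - int w"
    using c1 c2 c3 cS i1 by (simp add: c_def t_def d_def)
  have key: "{j. j < d \<and> i \<le> q ! j + j} = {..<c}"
  proof (intro equalityI subsetI)
    fix j assume j: "j \<in> {j. j < d \<and> i \<le> q ! j + j}"
    show "j \<in> {..<c}"
    proof (rule ccontr)
      assume "j \<notin> {..<c}"
      then have cj: "c \<le> j" by simp
      then have cd': "c < d" using j by simp
      have "c \<notin> S" using Sc by simp
      then have "\<not> w < q ! c" using cd' by (simp add: S_def)
      moreover have "q ! c \<noteq> w" using cd' wq nth_mem[of c q] by (auto simp: d_def)
      ultimately have "q ! c < w" by simp
      moreover have "q ! j + (j - c) \<le> q ! c" by (rule dec_gap[OF sq cj]) (use j in \<open>auto simp: d_def\<close>)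
      ultimately have "int (q ! j) + int j < int w + int c" using cj by linarith
      then show False using j ci by simp
    qed
  next
    fix j assume j: "j \<in> {..<c}"
    then have jS: "j \<in> S" using Sc by simp
    then have jd: "j < d" by (simp add: S_def)
    have c0: "0 < c" using j by simp
    have "c - 1 \<in> S" using Sc c0 by simp
    then have "w < q ! (c - 1)" "c - 1 < d" by (auto simp: S_def)
    moreover have "q ! (c - 1) + (c - 1 - j) \<le> q ! j"
      by (rule dec_gap[OF sq]) (use j \<open>c - 1 < d\<close> in \<open>auto simp: d_def\<close>)
    ultimately have "int i \<le> int (q ! j) + int j" using ci j by linarith
    then show "j \<in> {j. j < d \<and> i \<le> q ! j + j}" using jd by simp
  qed
  have "frob_part p q (Suc i) = card {j. 1 \<le> j \<and> j \<le> d \<and> Suc i \<le> q ! (j - 1) + j}"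
    using i1 lp by (simp add: frob_part_def d_def)
  also have "{j. 1 \<le> j \<and> j \<le> d \<and> Suc i \<le> q ! (j - 1) + j} = Suc ` {j. j < d \<and> i \<le> q ! j + j}"
  proof (intro equalityI subsetI)
    fix x assume "x \<in> {j. 1 \<le> j \<and> j \<le> d \<and> Suc i \<le> q ! (j - 1) + j}"
    then have "x = Suc (x - 1)" "x - 1 \<in> {j. j < d \<and> i \<le> q ! j + j}" by auto
    then show "x \<in> Suc ` {j. j < d \<and> i \<le> q ! j + j}" by blast
  qed auto
  also have "card (Suc ` {j. j < d \<and> i \<le> q ! j + j}) = c" unfolding key by (simp add: card_image)
  finally show ?thesis using ci by (simp add: ws_def w_def t_def d_def)
qed



lemma triple_assoc:
  fixes a :: "'k \<Rightarrow> 'a::comm_ring_1"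
  assumes A: "finite A"
  shows "(\<Sum>j<N. (\<Sum>k\<in>A. a k * b k j) * (\<Sum>c<N. u j c * v c)) =
         (\<Sum>k\<in>A. a k * (\<Sum>c<N. (\<Sum>j<N. b k j * u j c) * v c))"
proof -
  have "(\<Sum>j<N. (\<Sum>k\<in>A. a k * b k j) * (\<Sum>c<N. u j c * v c)) =
        (\<Sum>j<N. \<Sum>k\<in>A. \<Sum>c<N. a k * b k j * (u j c * v c))"
    by (simp only: sum_product)
  also have "\<dots> = (\<Sum>k\<in>A. \<Sum>j<N. \<Sum>c<N. a k * b k j * (u j c * v c))"
    by (rule sum.swap)
  also have "\<dots> = (\<Sum>k\<in>A. \<Sum>c<N. \<Sum>j<N. a k * b k j * (u j c * v c))"
    by (rule sum.cong[OF refl], rule sum.swap)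
  also have "\<dots> = (\<Sum>k\<in>A. a k * (\<Sum>c<N. (\<Sum>j<N. b k j * u j c) * v c))"
    by (simp add: sum_distrib_left sum_distrib_right mult_ac)
  finally show ?thesis .
qed

lemma double_assoc:
  fixes a :: "nat \<Rightarrow> 'a::comm_ring_1"
  shows "(\<Sum>r<N. a r * (\<Sum>c<N. b r c * v c)) = (\<Sum>c<N. (\<Sum>r<N. a r * b r c) * v c)"
proof -
  have "(\<Sum>r<N. a r * (\<Sum>c<N. b r c * v c)) = (\<Sum>r<N. \<Sum>c<N. a r * b r c * v c)"
    by (simp add: sum_distrib_left mult_ac)
  also have "\<dots> = (\<Sum>c<N. \<Sum>r<N. a r * b r c * v c)" by (rule sum.swap)
  also have "\<dots> = (\<Sum>c<N. (\<Sum>r<N. a r * b r c) * v c)" by (simp add: sum_distrib_right)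
  finally show ?thesis .
qed

lemma neg1_even:
  assumes "a + b + c + e = 2 * (m::nat)"
  shows "((-1)::'a::comm_ring_1)^a * (-1)^b * (-1)^c * (-1)^e = 1"
proof -
  have "((-1)::'a)^a * (-1)^b * (-1)^c * (-1)^e = (-1)^(a + b + c + e)" by (simp add: power_add)
  also have "\<dots> = 1" unfolding assms by (simp add: power_mult)
  finally show ?thesis .
qed

lemma sum_partition_list:
  assumes "set ws = {..<N} - set q" "set q \<subseteq> {..<N}" "distinct ws" "distinct (q::nat list)"
  shows "sum_list ws + sum_list q = (\<Sum>i<N. i)"
proof -
  have "sum_list ws + sum_list q = (\<Sum>x\<in>set ws. x) + (\<Sum>x\<in>set q. x)"
    using assms(3,4) by (simp add: distinct_sum_list_conv_Sum)
  also have "\<dots> = (\<Sum>x\<in>set ws \<union> set q. x)"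
    by (rule sum.union_disjoint[symmetric]) (use assms(1) in auto)
  also have "set ws \<union> set q = {..<N}" using assms(1,2) by auto
  finally show ?thesis by simp
qed

lemma sorted_list_set_dec:
  assumes "sorted_wrt (>) (q::nat list)"
  shows "sorted_list_of_set (set q) = rev q"
proof -
  have a: "sorted_wrt (<) (rev q)" using assms by (simp add: sorted_wrt_rev)
  show ?thesis
    by (rule sorted_distinct_set_unique) (use a in \<open>auto simp: strict_sorted_iff\<close>)
qed

lemma prod_neg1_list: "(\<Prod>c<length ks. ((-1)::'a::comm_ring_1)^(ks!c)) = (-1)^(sum_list ks)"
  by (simp add: power_sum sum_list_sum_nth atLeast0LessThan)



definition Zf :: "nat \<Rightarrow> (nat \<Rightarrow> nat \<Rightarrow> sym_fun) \<Rightarrow> nat \<Rightarrow> nat \<Rightarrow> sym_fun" where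
  "Zf N Vinv x l = (\<Sum>j<N. HB N x j * Vinv j l)"

lemma identity_det: "detN N (\<lambda>i j. if i = j then (1::'a::comm_ring_1) else 0) = 1"
  by (rule detN_upper_unit) auto

lemma det_V: "detN N (V N) = 1"
  by (rule detN_upper_unit) (auto simp: V_upper V_diag)

lemma det_Vinv:
  assumes inv: "\<forall>i<N. \<forall>j<N. (\<Sum>k<N. V N i k * Vinv k j) = (if i = j then 1 else 0)"
  shows "detN N Vinv = 1"
proof -
  have "detN N Vinv = detN N (V N) * detN N Vinv" using det_V by simp
  also have "\<dots> = detN N (\<lambda>i j. \<Sum>k<N. V N i k * Vinv k j)"
    by (rule detN_mult[symmetric])
  also have "\<dots> = detN N (\<lambda>i j. if i = j then (1::sym_fun) else 0)"
    by (rule detN_cong) (simp add: inv)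
  also have "\<dots> = 1" by (rule identity_det)
  finally show ?thesis .
qed

lemma det_Em: "detN N Em = 1"
  by (rule detN_upper_unit) (auto simp: Em_upper Em_diag)

lemma det_Bm: "detN N Bm = 1"
  by (rule detN_upper_unit) (auto simp: Bm_upper Bm_diag)

lemma FS_side:
  assumes v: "frob_valid p q" and pne: "p \<noteq> []"
    and Ndef: "N = frob_len q"
    and inv: "\<forall>i<N. \<forall>j<N. (\<Sum>k<N. V N i k * Vinv k j) = (if i = j then 1 else 0)"
  shows "FS p q = (-1)^(sum_list (sorted_list_of_set ({..<N} - set q)) + (\<Sum>i\<in>{length p..<N}. i)) *
    (\<Sum>xs\<in>decl {..p!0} (length p). \<Sum>ks\<in>decl {..<N} (length p).
       detN (length p) (\<lambda>i j. lconst (ccoef (p!i) (xs!j))) *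
       (detN (length p) (\<lambda>a c. Zf N Vinv (xs!a) (ks!c)) * detN (length p) (\<lambda>c l. Em (ks!c) (rev q ! l))))"
proof -
  define d where "d = length p"
  define K where "K = p ! 0"
  define ws where "ws = sorted_list_of_set ({..<N} - set q)"
  have sp: "sorted_wrt (>) p" and sq: "sorted_wrt (>) q" and lq: "length q = d"
    using v by (auto simp: frob_valid_def d_def)
  have d0: "0 < d" using pne by (simp add: d_def)
  have dq: "distinct q" using sq by (rule sorted_gt_distinct)
  have qN: "set q \<subseteq> {..<N}" using set_q_bound[OF sq] Ndef by simp
  have dN: "d \<le> N" using frob_len_ge[OF sq] Ndef lq by simp
  have sws: "sorted_wrt (<) ws" by (simp add: ws_def)
  have setws: "set ws = {..<N} - set q" by (simp add: ws_def)
  have lws: "length ws = N - d"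
    unfolding ws_def using qN dq lq by (simp add: card_Diff_subset distinct_card)
  have wsN: "set ws \<subseteq> {..<N}" using setws by auto
  have rq: "sorted_list_of_set ({..<N} - set ws) = rev q"
  proof -
    have "{..<N} - set ws = set q" using setws qN by auto
    then show ?thesis using sorted_list_set_dec[OF sq] by simp
  qed
  have pK: "p ! i \<le> K" if "i < d" for i
    using dec_gap[OF sp, of 0 i] that by (simp add: K_def d_def)
  define Y where "Y = (\<lambda>i l. \<Sum>c<N. Vinv i c * Em c l)"
  define ZE where "ZE = (\<lambda>x l. \<Sum>c<N. Zf N Vinv x c * Em c l)"
  define C where "C = (\<lambda>i x. lconst (ccoef (p!i) x))"
  define MF where "MF = (\<lambda>i j. hsh (tau (1 - int (j+1)) a_half) (int (frob_part p q (i+1)) - int (i+1) + int (j+1)))"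
  have FS: "FS p q = detN N MF"
    by (simp add: FS_def schur_sh_def MF_def Ndef)
  have dY: "detN N Y = 1"
    unfolding Y_def detN_mult det_Vinv[OF inv] det_Em by simp
  define MY where "MY = (\<lambda>i l. \<Sum>j<N. MF i j * Y j l)"
  have FS2: "FS p q = detN N MY"
    unfolding FS MY_def detN_mult dY by simp
  have rowP: "MY i l = (\<Sum>x\<in>{..K}. C i x * ZE x l)" if i: "i < d" and l: "l < N" for i l
  proof -
    have "MF i j = (\<Sum>x\<in>{..K}. C i x * HB N x j)" if j: "j < N" for j
    proof -
      have "MF i j = hsh (tau (- int j) a_half) (int (p ! i) + int j + 1)"
        using frob_part_pos[of i p q] i by (simp add: MF_def d_def algebra_simps)
      also have "\<dots> = (\<Sum>x\<le>K. lconst (ccoef (p!i) x) * HB N x j)"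
        by (rule row_pos[OF pK[OF i] j])
      finally show ?thesis by (simp add: C_def)
    qed
    then have "MY i l = (\<Sum>j<N. (\<Sum>x\<in>{..K}. C i x * HB N x j) * (\<Sum>c<N. Vinv j c * Em c l))"
      by (simp add: MY_def Y_def)
    also have "\<dots> = (\<Sum>x\<in>{..K}. C i x * (\<Sum>c<N. (\<Sum>j<N. HB N x j * Vinv j c) * Em c l))"
      by (rule triple_assoc) simp
    also have "\<dots> = (\<Sum>x\<in>{..K}. C i x * ZE x l)" by (simp add: ZE_def Zf_def)
    finally show ?thesis .
  qed
  have rowN: "MY i l = (if l = ws ! (i - d) then 1 else 0)" if i1: "d \<le> i" and i2: "i < N" and l: "l < N" for i l
  proof -
    define w where "w = ws ! (i - d)"
    have "i - d < length ws" using lws i1 i2 by simp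
    then have "w \<in> set ws" unfolding w_def by (rule nth_mem)
    then have wN: "w < N" using wsN by auto
    have "MF i j = (\<Sum>k\<in>{..<N}. Dm w k * V N k j)" if j: "j < N" for j
    proof -
      have fp: "int (frob_part p q (Suc i)) = int i - int w"
        using frob_part_neg[OF v _ _ i2] i1 Ndef lq by (simp add: w_def ws_def)
      have e1: "int (frob_part p q (i+1)) - int (i+1) + int (j+1) = int j - int w" using fp by simp
      have e2: "1 - int (j+1) = - int j" by simp
      have "MF i j = hsh (tau (- int j) a_half) (int j - int w)"
        by (simp only: MF_def e1 e2)
      also have "\<dots> = (\<Sum>k<N. Dm w k * V N k j)"
        by (rule row_neg[OF wN j])
      finally show ?thesis by simp
    qed
    then have "MY i l = (\<Sum>j<N. (\<Sum>k\<in>{..<N}. Dm w k * V N k j) * (\<Sum>c<N. Vinv j c * Em c l))"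
      by (simp add: MY_def Y_def)
    also have "\<dots> = (\<Sum>k\<in>{..<N}. Dm w k * (\<Sum>c<N. (\<Sum>j<N. V N k j * Vinv j c) * Em c l))"
      by (rule triple_assoc) simp
    also have "\<dots> = (\<Sum>k<N. Dm w k * Em k l)"
    proof (rule sum.cong[OF refl])
      fix k assume k: "k \<in> {..<N}"
      have "(\<Sum>c<N. (\<Sum>j<N. V N k j * Vinv j c) * Em c l) = (\<Sum>c<N. if k = c then Em c l else 0)"
        by (rule sum.cong[OF refl]) (use inv k in simp)
      also have "\<dots> = Em k l" using k by (simp add: sum.delta)
      finally show "Dm w k * (\<Sum>c<N. (\<Sum>j<N. V N k j * Vinv j c) * Em c l) = Dm w k * Em k l" by simp
    qed
    also have "\<dots> = (if w = l then 1 else 0)" by (rule DE[OF wN l])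
    finally show ?thesis by (auto simp: w_def)
  qed
  have UR: "detN N MY = (-1)^(sum_list ws + (\<Sum>i\<in>{d..<N}. i)) *
      detN d (\<lambda>i l. MY i (sorted_list_of_set ({..<N} - set ws) ! l))"
    by (rule detN_unit_rows[OF sws _ wsN]) (use lws dN rowN in auto)
  have rqN: "rev q ! l < N" if "l < d" for l
  proof -
    have "rev q ! l \<in> set (rev q)" using that lq by (intro nth_mem) simp
    then show ?thesis using qN by auto
  qed
  have "detN d (\<lambda>i l. MY i (rev q ! l)) = detN d (\<lambda>i l. \<Sum>x\<in>{..K}. C i x * ZE x (rev q ! l))"
    by (rule detN_cong) (simp add: rowP rqN)
  also have "\<dots> = (\<Sum>xs\<in>decl {..K} d. detN d (\<lambda>i j. C i (xs!j)) * detN d (\<lambda>a l. ZE (xs!a) (rev q ! l)))"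
    by (rule CB) simp
  also have "\<dots> = (\<Sum>xs\<in>decl {..K} d. \<Sum>ks\<in>decl {..<N} d. detN d (\<lambda>i j. C i (xs!j)) *
        (detN d (\<lambda>a c. Zf N Vinv (xs!a) (ks!c)) * detN d (\<lambda>c l. Em (ks!c) (rev q ! l))))"
  proof (rule sum.cong[OF refl])
    fix xs
    have "detN d (\<lambda>a l. ZE (xs!a) (rev q ! l)) = detN d (\<lambda>a l. \<Sum>c\<in>{..<N}. Zf N Vinv (xs!a) c * Em c (rev q ! l))"
      by (simp add: ZE_def)
    also have "\<dots> = (\<Sum>ks\<in>decl {..<N} d. detN d (\<lambda>a c. Zf N Vinv (xs!a) (ks!c)) * detN d (\<lambda>c l. Em (ks!c) (rev q ! l)))"
      by (rule CB) simp
    finally show "detN d (\<lambda>i j. C i (xs!j)) * detN d (\<lambda>a l. ZE (xs!a) (rev q ! l)) =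
      (\<Sum>ks\<in>decl {..<N} d. detN d (\<lambda>i j. C i (xs!j)) *
        (detN d (\<lambda>a c. Zf N Vinv (xs!a) (ks!c)) * detN d (\<lambda>c l. Em (ks!c) (rev q ! l))))"
      by (simp add: sum_distrib_left)
  qed
  finally have main: "detN d (\<lambda>i l. MY i (rev q ! l)) = \<dots>" .
  show ?thesis
    unfolding FS2 UR rq main by (simp add: C_def K_def d_def ws_def)
qed



lemma ord_side:
  assumes xs: "xs \<in> decl S d" and ks: "ks \<in> decl {..<N} d" and d0: "0 < d"
    and inv: "\<forall>i<N. \<forall>j<N. (\<Sum>k<N. V N i k * Vinv k j) = (if i = j then 1 else 0)"
  shows "s_frob xs ks = (-1)^(sum_list (sorted_list_of_set ({..<N} - set ks)) + (\<Sum>i\<in>{d..<N}. i)) *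
     detN d (\<lambda>a l. Zf N Vinv (xs!a) (rev ks ! l))"
proof -
  define ws where "ws = sorted_list_of_set ({..<N} - set ks)"
  have lxs: "length xs = d" and sxs: "sorted_wrt (>) xs" using xs by (auto simp: decl_def)
  have lks: "length ks = d" and sks: "sorted_wrt (>) ks" and ksN: "set ks \<subseteq> {..<N}"
    using ks by (auto simp: decl_def)
  have v: "frob_valid xs ks" using lxs lks sxs sks by (simp add: frob_valid_def)
  have dks: "distinct ks" using sks by (rule sorted_gt_distinct)
  have FL: "frob_len ks \<le> N"
  proof -
    have "ks ! 0 \<in> set ks" using lks d0 by simp
    then show ?thesis using ksN lks d0 by (cases ks) (auto simp: frob_len_def)
  qed
  have dN: "d \<le> N" using frob_len_ge[OF sks] FL lks by simp
  have sws: "sorted_wrt (<) ws" by (simp add: ws_def)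
  have setws: "set ws = {..<N} - set ks" by (simp add: ws_def)
  have lws: "length ws = N - d"
    unfolding ws_def using ksN dks lks by (simp add: card_Diff_subset distinct_card)
  have wsN: "set ws \<subseteq> {..<N}" using setws by auto
  have rks: "sorted_list_of_set ({..<N} - set ws) = rev ks"
  proof -
    have "{..<N} - set ws = set ks" using setws ksN by auto
    then show ?thesis using sorted_list_set_dec[OF sks] by simp
  qed
  define mu where "mu = frob_part xs ks"
  have st: "schur N mu = schur (frob_len ks) mu"
    by (rule schur_stable[OF _ FL]) (use frob_part_zero[OF v] in \<open>simp add: mu_def\<close>)
  define MO where "MO = (\<lambda>i j. hc (int (mu (i+1)) - int (i+1) + int (j+1)))"
  have s1: "s_frob xs ks = detN N MO"
    using st by (simp add: s_frob_def mu_def schur_def MO_def)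
  define Tinv where "Tinv = (\<lambda>r l. \<Sum>c<N. Bm r c * Vinv c l)"
  have dT: "detN N Tinv = 1"
    unfolding Tinv_def detN_mult det_Vinv[OF inv] det_Bm by simp
  define MT where "MT = (\<lambda>i l. \<Sum>r<N. MO i r * Tinv r l)"
  have s2: "s_frob xs ks = detN N MT"
    unfolding s1 MT_def detN_mult dT by simp
  have rowP: "MT i l = Zf N Vinv (xs!i) l" if i: "i < d" and l: "l < N" for i l
  proof -
    have m: "MO i r = hc (int (xs!i) + int r + 1)" for r
      using frob_part_pos[of i xs ks] i lxs by (simp add: MO_def mu_def algebra_simps)
    have "MT i l = (\<Sum>r<N. hc (int (xs!i) + int r + 1) * (\<Sum>c<N. Bm r c * Vinv c l))"
      by (simp add: MT_def Tinv_def m)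
    also have "\<dots> = (\<Sum>c<N. (\<Sum>r<N. hc (int (xs!i) + int r + 1) * Bm r c) * Vinv c l)"
      by (rule double_assoc)
    also have "\<dots> = Zf N Vinv (xs!i) l" by (simp add: Zf_def HB_def)
    finally show ?thesis .
  qed
  have rowN: "MT i l = (if l = ws ! (i - d) then 1 else 0)" if i1: "d \<le> i" and i2: "i < N" and l: "l < N" for i l
  proof -
    define w where "w = ws ! (i - d)"
    have "i - d < length ws" using lws i1 i2 by simp
    then have "w \<in> set ws" unfolding w_def by (rule nth_mem)
    then have wN: "w < N" using wsN by auto
    have fp: "int (frob_part xs ks (Suc i)) = int i - int w"
      using frob_part_neg[OF v FL _ i2] i1 lks by (simp add: w_def ws_def)
    have m: "MO i r = hc (int r - int w)" for r
    proof -
      have "int (mu (i+1)) - int (i+1) + int (r+1) = int r - int w" using fp by (simp add: mu_def)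
      then show ?thesis by (simp only: MO_def)
    qed
    have "MT i l = (\<Sum>r<N. hc (int r - int w) * (\<Sum>c<N. Bm r c * Vinv c l))"
      by (simp add: MT_def Tinv_def m)
    also have "\<dots> = (\<Sum>c<N. (\<Sum>r<N. hc (int r - int w) * Bm r c) * Vinv c l)"
      by (rule double_assoc)
    also have "\<dots> = (\<Sum>c<N. V N w c * Vinv c l)" by (simp add: V_def)
    also have "\<dots> = (if w = l then 1 else 0)" using inv wN l by simp
    finally show ?thesis by (auto simp: w_def)
  qed
  have UR: "detN N MT = (-1)^(sum_list ws + (\<Sum>i\<in>{d..<N}. i)) *
      detN d (\<lambda>i l. MT i (sorted_list_of_set ({..<N} - set ws) ! l))"
    by (rule detN_unit_rows[OF sws _ wsN]) (use lws dN rowN in auto)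
  have rkN: "rev ks ! l < N" if "l < d" for l
  proof -
    have "rev ks ! l \<in> set (rev ks)" using that lks by (intro nth_mem) simp
    then show ?thesis using ksN by auto
  qed
  have "detN d (\<lambda>i l. MT i (rev ks ! l)) = detN d (\<lambda>a l. Zf N Vinv (xs!a) (rev ks ! l))"
    by (rule detN_cong) (simp add: rowP rkN)
  then show ?thesis unfolding s2 UR rks by (simp add: ws_def)
qed



lemma detc_zero:
  assumes lx: "length xs = d" and lp: "length p = d"
    and sx: "sorted_wrt (>) xs" and sp: "sorted_wrt (>) (p::nat list)"
    and nl: "\<not> list_all2 (\<le>) xs p"
  shows "detN d (\<lambda>i j. ccoef (p!i) (xs!j)) = 0"
proof -
  obtain k where k: "k < d" "\<not> xs ! k \<le> p ! k"
    using nl lx lp by (auto simp: list_all2_conv_all_nth)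
  show ?thesis
  proof (rule detN_zero_block[OF k(1)])
    fix a b assume a: "k \<le> a" "a < d" and b: "b \<le> k"
    have "xs ! k + (k - b) \<le> xs ! b" by (rule dec_gap[OF sx b]) (use k lx in simp)
    moreover have "p ! a + (a - k) \<le> p ! k" by (rule dec_gap[OF sp a(1)]) (use a lp in simp)
    ultimately have "p ! a < xs ! b" using k(2) by simp
    then show "ccoef (p ! a) (xs ! b) = 0" by (rule ccoef_zero)
  qed
qed

lemma term_eq:
  assumes xs: "xs \<in> decl S d" and ks: "ks \<in> decl {..<N} d" and d0: "0 < d"
    and inv: "\<forall>i<N. \<forall>j<N. (\<Sum>k<N. V N i k * Vinv k j) = (if i = j then 1 else 0)"
    and qN: "set q \<subseteq> {..<N}" and sq: "sorted_wrt (>) q" and lq: "length q = d"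
  shows "(-1)^(sum_list (sorted_list_of_set ({..<N} - set q)) + (\<Sum>i\<in>{d..<N}. i)) *
      (detN d (\<lambda>i j. lconst (ccoef (p!i) (xs!j))) *
       (detN d (\<lambda>a c. Zf N Vinv (xs!a) (ks!c)) * detN d (\<lambda>c l. Em (ks!c) (rev q ! l)))) =
    lconst (detN d (\<lambda>i j. ccoef (p!i) (xs!j)) * detN d (\<lambda>i j. ccoef (q!i) (ks!j))) * s_frob xs ks"
proof -
  define ws where "ws = sorted_list_of_set ({..<N} - set q)"
  define ws' where "ws' = sorted_list_of_set ({..<N} - set ks)"
  define \<Sigma> where "\<Sigma> = (\<Sum>i\<in>{d..<N}. i)"
  define sg :: sym_fun where "sg = of_int (sign (rv d))"
  have sg2: "sg * sg = 1" unfolding sg_def by (rule sign_sq)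
  have lks: "length ks = d" and sks: "sorted_wrt (>) ks" and ksN: "set ks \<subseteq> {..<N}"
    using ks by (auto simp: decl_def)
  define dZ where "dZ = detN d (\<lambda>a c. Zf N Vinv (xs!a) (ks!c))"
  define s where "s = s_frob xs ks"
  have "detN d (\<lambda>a l. Zf N Vinv (xs!a) (rev ks ! l)) = detN d (\<lambda>a l. Zf N Vinv (xs!a) (ks ! rv d l))"
    by (rule detN_cong) (simp add: rev_nth_rv lks)
  also have "\<dots> = sg * dZ" unfolding sg_def dZ_def
    by (rule detN_permute_cols[OF rv_permutes, where f="\<lambda>a c. Zf N Vinv (xs!a) (ks!c)"])
  finally have z1: "detN d (\<lambda>a l. Zf N Vinv (xs!a) (rev ks ! l)) = sg * dZ" .
  have sZ: "s = (-1)^(sum_list ws' + \<Sigma>) * (sg * dZ)"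
    unfolding s_def ws'_def \<Sigma>_def z1[symmetric] by (rule ord_side[OF xs ks d0 inv])
  have dZs: "dZ = sg * (-1)^(sum_list ws' + \<Sigma>) * s"
  proof -
    have "sg * (-1)^(sum_list ws' + \<Sigma>) * s = (sg * sg) * (((-1)^(sum_list ws' + \<Sigma>)) * (-1)^(sum_list ws' + \<Sigma>)) * dZ"
      unfolding sZ by (simp only: mult_ac)
    also have "((-1::sym_fun)^(sum_list ws' + \<Sigma>)) * (-1)^(sum_list ws' + \<Sigma>) = 1"
      by (simp add: power_add[symmetric] power_mult[symmetric] mult_2[symmetric] mult.commute)
    finally show ?thesis using sg2 by simp
  qed
  define dC where "dC = detN d (\<lambda>i j. ccoef (q!i) (ks!j))"
  have "detN d (\<lambda>c l. Em (ks!c) (rev q ! l)) = detN d (\<lambda>c l. Em (ks!c) (q ! rv d l))"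
    by (rule detN_cong) (simp add: rev_nth_rv lq)
  also have "\<dots> = sg * detN d (\<lambda>c l. Em (ks!c) (q!l))" unfolding sg_def
    by (rule detN_permute_cols[OF rv_permutes, where f="\<lambda>c l. Em (ks!c) (q!l)"])
  also have "detN d (\<lambda>c l. Em (ks!c) (q!l)) =
      detN d (\<lambda>c l. (-1)^(ks!c) * (-1)^(q!l) * lconst (ccoef (q!l) (ks!c)))"
    by (rule detN_cong) (simp add: Em_ccoef power_add)
  also have "\<dots> = (\<Prod>c<d. (-1)^(ks!c)) * (\<Prod>l<d. (-1)^(q!l)) * detN d (\<lambda>c l. lconst (ccoef (q!l) (ks!c)))"
    by (rule detN_scale)
  also have "(\<Prod>c<d. ((-1)::sym_fun)^(ks!c)) = (-1)^(sum_list ks)"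
    using prod_neg1_list[of ks] lks by simp
  also have "(\<Prod>l<d. ((-1)::sym_fun)^(q!l)) = (-1)^(sum_list q)"
    using prod_neg1_list[of q] lq by simp
  also have "detN d (\<lambda>c l. lconst (ccoef (q!l) (ks!c))) = detN d (\<lambda>i j. lconst (ccoef (q!i) (ks!j)))"
    by (rule detN_transpose)
  also have "\<dots> = lconst dC" unfolding dC_def by (rule detN_lconst)
  finally have dE: "detN d (\<lambda>c l. Em (ks!c) (rev q ! l)) = sg * ((-1)^(sum_list ks) * (-1)^(sum_list q) * lconst dC)" .
  have dq: "distinct q" using sq by (rule sorted_gt_distinct)
  have dks: "distinct ks" using sks by (rule sorted_gt_distinct)
  have p1: "sum_list ws + sum_list q = (\<Sum>i<N. i)"
    by (rule sum_partition_list) (use qN dq in \<open>auto simp: ws_def\<close>)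
  have p2: "sum_list ws' + sum_list ks = (\<Sum>i<N. i)"
    by (rule sum_partition_list) (use ksN dks in \<open>auto simp: ws'_def\<close>)
  have sgn: "((-1::sym_fun)^(sum_list ws + \<Sigma>)) * (-1)^(sum_list ws' + \<Sigma>) * (-1)^(sum_list ks) * (-1)^(sum_list q) = 1"
    by (rule neg1_even[of _ _ _ _ "(\<Sum>i<N. i) + \<Sigma>"]) (use p1 p2 in simp)
  define dP where "dP = detN d (\<lambda>i j. lconst (ccoef (p!i) (xs!j)))"
  have dP': "dP = lconst (detN d (\<lambda>i j. ccoef (p!i) (xs!j)))" unfolding dP_def by (rule detN_lconst)
  have "(-1)^(sum_list ws + \<Sigma>) * (dP * (dZ * detN d (\<lambda>c l. Em (ks!c) (rev q ! l)))) =
    ((-1::sym_fun)^(sum_list ws + \<Sigma>) * (-1)^(sum_list ws' + \<Sigma>) * (-1)^(sum_list ks) * (-1)^(sum_list q)) *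
      (sg * sg) * (dP * lconst dC * s)"
    unfolding dZs dE by (simp only: mult_ac)
  also have "\<dots> = dP * lconst dC * s" unfolding sgn sg2 by simp
  finally show ?thesis
    unfolding ws_def[symmetric] \<Sigma>_def[symmetric] dP_def[symmetric] dZ_def[symmetric]
    by (simp add: dP' dC_def s_def lconst_mult)
qed


theorem theorem9:
  fixes p q :: "nat list"
  assumes "frob_valid p q"
  shows "FS p q =
    (\<Sum>(p', q') \<in> {(p', q'). frob_valid p' q' \<and> length p' = length p
                     \<and> list_all2 (\<le>) p' p \<and> list_all2 (\<le>) q' q}.
       lconst (detN (length p) (\<lambda>i j. ccoef (p ! i) (p' ! j))
             * detN (length p) (\<lambda>i j. ccoef (q ! i) (q' ! j)))
       * s_frob p' q')"
proof (cases "p = []")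
  case True
  then have q: "q = []" using assms by (simp add: frob_valid_def)
  have set: "{(p', q'). frob_valid p' q' \<and> length p' = length p
                     \<and> list_all2 (\<le>) p' p \<and> list_all2 (\<le>) q' q} = {([], [])}"
    using True q by (auto simp: frob_valid_def)
  show ?thesis unfolding set using True q
    by (simp add: FS_def schur_sh_def s_frob_def schur_def frob_len_def detN_def)
next
  case False
  define d where "d = length p"
  define N where "N = frob_len q"
  define K where "K = p ! 0"
  have d0: "0 < d" using False by (simp add: d_def)
  have sp: "sorted_wrt (>) p" and sq: "sorted_wrt (>) q" and lq: "length q = d"
    using assms by (auto simp: frob_valid_def d_def)
  have qN: "set q \<subseteq> {..<N}" using set_q_bound[OF sq] by (simp add: N_def)
  obtain Vinv where inv: "\<forall>i<N. \<forall>j<N. (\<Sum>k<N. V N i k * Vinv k j) = (if i = j then 1 else 0)"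
    using detN_right_inverse[OF det_V] by blast
  define g where "g = (\<lambda>xs ks. lconst (detN d (\<lambda>i j. ccoef (p!i) (xs!j)) * detN d (\<lambda>i j. ccoef (q!i) (ks!j))) * s_frob xs ks)"
  define Set where "Set = {(p', q'). frob_valid p' q' \<and> length p' = length p
                     \<and> list_all2 (\<le>) p' p \<and> list_all2 (\<le>) q' q}"
  have "FS p q = (-1)^(sum_list (sorted_list_of_set ({..<N} - set q)) + (\<Sum>i\<in>{d..<N}. i)) *
    (\<Sum>xs\<in>decl {..K} d. \<Sum>ks\<in>decl {..<N} d.
       detN d (\<lambda>i j. lconst (ccoef (p!i) (xs!j))) *
       (detN d (\<lambda>a c. Zf N Vinv (xs!a) (ks!c)) * detN d (\<lambda>c l. Em (ks!c) (rev q ! l))))"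
    unfolding d_def K_def by (rule FS_side[OF assms False N_def inv])
  also have "\<dots> = (\<Sum>xs\<in>decl {..K} d. \<Sum>ks\<in>decl {..<N} d. g xs ks)"
    unfolding sum_distrib_left g_def
    by (intro sum.cong refl term_eq[OF _ _ d0 inv qN sq lq])
  also have "\<dots> = (\<Sum>(xs, ks)\<in>decl {..K} d \<times> decl {..<N} d. g xs ks)"
    by (rule sum.cartesian_product)
  also have "\<dots> = (\<Sum>(xs, ks)\<in>Set. g xs ks)"
  proof (rule sum.mono_neutral_right)
    show "finite (decl {..K} d \<times> decl {..<N} d)" by (simp add: finite_decl)
    show "Set \<subseteq> decl {..K} d \<times> decl {..<N} d"
    proof
      fix z assume z: "z \<in> Set"
      obtain xs ks where zz: "z = (xs, ks)" by (cases z)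
      have v: "frob_valid xs ks" and lx: "length xs = d" and a1: "list_all2 (\<le>) xs p" and a2: "list_all2 (\<le>) ks q"
        using z zz by (auto simp: Set_def d_def)
      have "set xs \<subseteq> {..K}"
      proof
        fix x assume "x \<in> set xs"
        then obtain i where i: "i < d" "x = xs ! i" using lx by (auto simp: in_set_conv_nth)
        have "xs ! i \<le> p ! i" using a1 i lx by (auto simp: list_all2_conv_all_nth)
        moreover have "p ! i + (i - 0) \<le> p ! 0" by (rule dec_gap[OF sp]) (use i in \<open>auto simp: d_def\<close>)
        ultimately show "x \<in> {..K}" using i by (simp add: K_def)
      qed
      moreover have "set ks \<subseteq> {..<N}"
      proof
        fix x assume "x \<in> set ks"
        then obtain i where i: "i < length ks" "x = ks ! i" by (auto simp: in_set_conv_nth)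
        have "ks ! i \<le> q ! i" using a2 i by (auto simp: list_all2_conv_all_nth)
        moreover have "q ! i \<in> set q" using a2 i by (auto simp: list_all2_conv_all_nth)
        ultimately show "x \<in> {..<N}" using i qN by auto
      qed
      ultimately show "z \<in> decl {..K} d \<times> decl {..<N} d"
        using v lx zz by (auto simp: decl_def frob_valid_def)
    qed
    show "\<forall>z\<in>decl {..K} d \<times> decl {..<N} d - Set. (case z of (xs, ks) \<Rightarrow> g xs ks) = 0"
    proof
      fix z assume z: "z \<in> decl {..K} d \<times> decl {..<N} d - Set"
      obtain xs ks where zz: "z = (xs, ks)" by (cases z)
      have lx: "length xs = d" "sorted_wrt (>) xs" and lk: "length ks = d" "sorted_wrt (>) ks"
        using z zz by (auto simp: decl_def)
      have "\<not> list_all2 (\<le>) xs p \<or> \<not> list_all2 (\<le>) ks q"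
        using z zz lx lk by (auto simp: Set_def frob_valid_def d_def)
      then have "detN d (\<lambda>i j. ccoef (p!i) (xs!j)) = 0 \<or> detN d (\<lambda>i j. ccoef (q!i) (ks!j)) = 0"
        using detc_zero[OF lx(1) _ lx(2) sp, of] detc_zero[OF lk(1) lq lk(2) sq] by (auto simp: d_def)
      then show "(case z of (xs, ks) \<Rightarrow> g xs ks) = 0" by (auto simp: zz g_def)
    qed
  qed
  finally show ?thesis by (simp add: g_def Set_def d_def)
qed


end
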